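(* Let $A$ and $B$ be groups each admitting a regular left-order. Then $(A*B)\times\mathbb{Z}$ admits a regular left-order.
   Context: A left-order on a group $G$ is a total order invariant under left multiplication, with positive cone $P=\{g:1\prec g\}$. It is regular if $G$ is finitely generated and there exist a finite set $X$, a surjective monoid homomorphism $\pi\colon X^*\to G$ and a regular language $\mathcal{L}\subseteq X^*$ (accepted by a finite state automaton) with $\pi(\mathcal{L})=P$. $A*B$ denotes the free product. *)

theory Defs
  imports "HOL-Algebra.Algebra"
begin

definition left_order :: "('a, 'm) monoid_scheme \<Rightarrow> ('a \<Rightarrow> 'a \<Rightarrow> bool) \<Rightarrow> bool" where
  "left_order G lt \<longleftrightarrow>
     (\<forall>x\<in>carrier G. \<not> lt x x) \<and>
     (\<forall>x\<in>carrier G. \<forall>y\<in>carrier G. \<forall>z\<in>carrier G. lt x y \<longrightarrow> lt y z \<longrightarrow> lt x z) \<and>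
     (\<forall>x\<in>carrier G. \<forall>y\<in>carrier G. x \<noteq> y \<longrightarrow> lt x y \<or> lt y x) \<and>
     (\<forall>g\<in>carrier G. \<forall>h\<in>carrier G. \<forall>k\<in>carrier G. lt h k \<longrightarrow> lt (g \<otimes>\<^bsub>G\<^esub> h) (g \<otimes>\<^bsub>G\<^esub> k))"

definition positive_cone :: "('a, 'm) monoid_scheme \<Rightarrow> ('a \<Rightarrow> 'a \<Rightarrow> bool) \<Rightarrow> 'a set" where
  "positive_cone G lt = {g \<in> carrier G. lt \<one>\<^bsub>G\<^esub> g}"

definition regular_language :: "nat set \<Rightarrow> nat list set \<Rightarrow> bool" where
  "regular_language Alph L \<longleftrightarrow>
     (\<exists>(Sts::nat set) (q0::nat) (Acc::nat set) (trans_fn::nat \<Rightarrow> nat \<Rightarrow> nat).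
        finite Sts \<and> q0 \<in> Sts \<and> Acc \<subseteq> Sts \<and>
        (\<forall>q\<in>Sts. \<forall>c\<in>Alph. trans_fn q c \<in> Sts) \<and>
        L = {w \<in> lists Alph. foldl trans_fn q0 w \<in> Acc})"

definition word_monoid_hom :: "nat set \<Rightarrow> ('a, 'm) monoid_scheme \<Rightarrow> (nat list \<Rightarrow> 'a) \<Rightarrow> bool" where
  "word_monoid_hom Alph G \<pi> \<longleftrightarrow>
     \<pi> [] = \<one>\<^bsub>G\<^esub> \<and>
     (\<forall>w\<in>lists Alph. \<pi> w \<in> carrier G) \<and>
     (\<forall>u\<in>lists Alph. \<forall>v\<in>lists Alph. \<pi> (u @ v) = \<pi> u \<otimes>\<^bsub>G\<^esub> \<pi> v)"

definition finitely_generated_group :: "('a, 'm) monoid_scheme \<Rightarrow> bool" where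
  "finitely_generated_group G \<longleftrightarrow>
     (\<exists>S. finite S \<and> S \<subseteq> carrier G \<and> generate G S = carrier G)"

definition regular_left_order :: "('a, 'm) monoid_scheme \<Rightarrow> ('a \<Rightarrow> 'a \<Rightarrow> bool) \<Rightarrow> bool" where
  "regular_left_order G lt \<longleftrightarrow>
     left_order G lt \<and> finitely_generated_group G \<and>
     (\<exists>(Alph::nat set) \<pi> L. finite Alph \<and> word_monoid_hom Alph G \<pi> \<and> \<pi> ` lists Alph = carrier G \<and>
        regular_language Alph L \<and> \<pi> ` L = positive_cone G lt)"

definition admits_regular_left_order :: "('a, 'm) monoid_scheme \<Rightarrow> bool" where
  "admits_regular_left_order G \<longleftrightarrow> (\<exists>lt. regular_left_order G lt)"

text \<open>Elements of A * B are reduced words: lists of letters Inl a (a a nontrivial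
element of A) or Inr b (b nontrivial in B), with no two adjacent letters from the
same factor.\<close>
fun same_factor :: "'a + 'b \<Rightarrow> 'a + 'b \<Rightarrow> bool" where
  "same_factor (Inl _) (Inl _) = True"
| "same_factor (Inr _) (Inr _) = True"
| "same_factor _ _ = False"

fun fp_letter :: "('a, 'm) monoid_scheme \<Rightarrow> ('b, 'n) monoid_scheme \<Rightarrow> 'a + 'b \<Rightarrow> bool" where
  "fp_letter A B (Inl a) \<longleftrightarrow> a \<in> carrier A \<and> a \<noteq> \<one>\<^bsub>A\<^esub>"
| "fp_letter A B (Inr b) \<longleftrightarrow> b \<in> carrier B \<and> b \<noteq> \<one>\<^bsub>B\<^esub>"

definition fp_reduced :: "('a, 'm) monoid_scheme \<Rightarrow> ('b, 'n) monoid_scheme \<Rightarrow> ('a + 'b) list \<Rightarrow> bool" where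
  "fp_reduced A B w \<longleftrightarrow> (\<forall>x\<in>set w. fp_letter A B x) \<and>
     (\<forall>i. Suc i < length w \<longrightarrow> \<not> same_factor (w ! i) (w ! Suc i))"

fun fp_cons :: "('a, 'm) monoid_scheme \<Rightarrow> ('b, 'n) monoid_scheme \<Rightarrow> 'a + 'b \<Rightarrow> ('a + 'b) list \<Rightarrow> ('a + 'b) list" where
  "fp_cons A B (Inl a) (Inl a' # w) =
     (let c = a \<otimes>\<^bsub>A\<^esub> a' in if c = \<one>\<^bsub>A\<^esub> then w else Inl c # w)"
| "fp_cons A B (Inr b) (Inr b' # w) =
     (let c = b \<otimes>\<^bsub>B\<^esub> b' in if c = \<one>\<^bsub>B\<^esub> then w else Inr c # w)"
| "fp_cons A B x w = x # w"

definition free_product :: "('a, 'm) monoid_scheme \<Rightarrow> ('b, 'n) monoid_scheme \<Rightarrow> ('a + 'b) list monoid" where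
  "free_product A B =
     \<lparr>carrier = {w. fp_reduced A B w},
      monoid.mult = (\<lambda>u v. foldr (fp_cons A B) u v),
      one = []\<rparr>"

end

theory Submission
  imports Defs
begin


definition quot :: "'c list set \<Rightarrow> 'c list \<Rightarrow> 'c list set" where
  "quot L u = {w. u @ w \<in> L}"

definition fq :: "nat set \<Rightarrow> nat list set \<Rightarrow> bool" where
  "fq Alph L \<longleftrightarrow> L \<subseteq> lists Alph \<and> finite (quot L ` lists Alph)"

definition conc :: "'c list set \<Rightarrow> 'c list set \<Rightarrow> 'c list set" where
  "conc L1 L2 = {u @ v | u v. u \<in> L1 \<and> v \<in> L2}"

inductive_set kstar :: "'c list set \<Rightarrow> 'c list set" for L where
  kstar_nil: "[] \<in> kstar L"
| kstar_app: "u \<in> L \<Longrightarrow> v \<in> kstar L \<Longrightarrow> u @ v \<in> kstar L"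

lemma dfa_regular:
  fixes Q :: "'s set" and qi :: 's and \<delta> :: "'s \<Rightarrow> nat \<Rightarrow> 's"
  assumes fin: "finite Q" and q0: "qi \<in> Q" and F: "F \<subseteq> Q"
    and cl: "\<forall>q\<in>Q. \<forall>c\<in>Alph. \<delta> q c \<in> Q"
    and L: "L = {w \<in> lists Alph. foldl \<delta> qi w \<in> F}"
  shows "regular_language Alph L"
proof -
  obtain f :: "'s \<Rightarrow> nat" and n where fn: "f ` Q = {i. i < n}" and inj: "inj_on f Q"
    using finite_imp_inj_to_nat_seg[OF fin] by blast
  define g where "g = inv_into Q f"
  define tr where "tr = (\<lambda>m c. f (\<delta> (g m) c))"
  have gf: "g (f q) = q" if "q \<in> Q" for q using inj that by (simp add: g_def)
  have key: "\<forall>q\<in>Q. foldl tr (f q) w = f (foldl \<delta> q w) \<and> foldl \<delta> q w \<in> Q"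
    if "w \<in> lists Alph" for w
    using that
  proof (induction w)
    case Nil
    then show ?case by simp
  next
    case (Cons c w)
    show ?case
    proof
      fix q assume q: "q \<in> Q"
      have "\<delta> q c \<in> Q" using cl q Cons by auto
      moreover have "tr (f q) c = f (\<delta> q c)" by (simp add: tr_def gf q)
      ultimately show "foldl tr (f q) (c # w) = f (foldl \<delta> q (c # w)) \<and> foldl \<delta> q (c # w) \<in> Q"
        using Cons by simp
    qed
  qed
  show ?thesis
    unfolding regular_language_def
  proof (intro exI conjI)
    show "finite (f ` Q)" using fin by simp
    show "f qi \<in> f ` Q" using q0 by simp
    show "f ` F \<subseteq> f ` Q" using F by auto
    show "\<forall>q\<in>f ` Q. \<forall>c\<in>Alph. tr q c \<in> f ` Q" using cl by (auto simp: tr_def gf)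
    show "L = {w \<in> lists Alph. foldl tr (f qi) w \<in> f ` F}"
    proof -
      have "foldl tr (f qi) w \<in> f ` F \<longleftrightarrow> foldl \<delta> qi w \<in> F" if "w \<in> lists Alph" for w
        using key[OF that] q0 inj F by (auto simp: inj_on_image_mem_iff)
      then show ?thesis using L by auto
    qed
  qed
qed

lemma foldl_quot: "foldl (\<lambda>K c. {w. c # w \<in> K}) K u = {w. u @ w \<in> K}"
  by (induction u arbitrary: K) auto

lemma fq_regular:
  assumes "fq Alph L" shows "regular_language Alph L"
proof -
  let ?Q = "quot L ` lists Alph"
  let ?d = "\<lambda>K c. {w. c # w \<in> K}"
  have sub: "L \<subseteq> lists Alph" and fin: "finite ?Q" using assms by (auto simp: fq_def)
  show ?thesis
  proof (rule dfa_regular[where Q = ?Q and qi = L and \<delta> = ?d and F = "{K \<in> ?Q. [] \<in> K}"])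
    show "finite ?Q" by fact
    show "L \<in> ?Q" by (rule image_eqI[where x = "[]"]) (auto simp: quot_def)
    show "{K \<in> ?Q. [] \<in> K} \<subseteq> ?Q" by auto
    show "\<forall>q\<in>?Q. \<forall>c\<in>Alph. ?d q c \<in> ?Q"
    proof (intro ballI)
      fix q c assume "q \<in> ?Q" "c \<in> Alph"
      then obtain u where u: "u \<in> lists Alph" "q = quot L u" by auto
      have "?d q c = quot L (u @ [c])" using u by (auto simp: quot_def)
      then show "?d q c \<in> ?Q" using u \<open>c \<in> Alph\<close> by auto
    qed
    show "L = {w \<in> lists Alph. foldl ?d L w \<in> {K \<in> ?Q. [] \<in> K}}"
      using sub by (auto simp: foldl_quot quot_def)
  qed
qed

lemma regular_fq:
  assumes "regular_language Alph L" shows "fq Alph L"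
proof -
  obtain Sts q0 Acc \<delta> where fin: "finite (Sts::nat set)" and q0: "q0 \<in> Sts" and A: "Acc \<subseteq> Sts"
    and cl: "\<forall>q\<in>Sts. \<forall>c\<in>Alph. \<delta> q c \<in> Sts" and L: "L = {w \<in> lists Alph. foldl \<delta> q0 w \<in> Acc}"
    using assms unfolding regular_language_def by blast
  have inS: "\<forall>q\<in>Sts. foldl \<delta> q u \<in> Sts" if "u \<in> lists Alph" for u
    using that by (induction u) (use cl in auto)
  have "quot L ` lists Alph \<subseteq> (\<lambda>q. {w \<in> lists Alph. foldl \<delta> q w \<in> Acc}) ` Sts"
  proof
    fix K assume "K \<in> quot L ` lists Alph"
    then obtain u where u: "u \<in> lists Alph" "K = quot L u" by auto
    have "K = {w \<in> lists Alph. foldl \<delta> (foldl \<delta> q0 u) w \<in> Acc}"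
      using u by (auto simp: quot_def L)
    then show "K \<in> (\<lambda>q. {w \<in> lists Alph. foldl \<delta> q w \<in> Acc}) ` Sts"
      using inS[OF u(1)] q0 by auto
  qed
  then have "finite (quot L ` lists Alph)" using fin finite_subset by blast
  then show ?thesis using L by (auto simp: fq_def)
qed

lemma fqI: "quot L ` lists Alph \<subseteq> QS \<Longrightarrow> L \<subseteq> lists Alph \<Longrightarrow> finite QS \<Longrightarrow> fq Alph L"
  unfolding fq_def using finite_subset by auto

lemma fq_union: assumes "fq Alph L1" "fq Alph L2" shows "fq Alph (L1 \<union> L2)"
proof -
  have "quot (L1 \<union> L2) ` lists Alph \<subseteq> (\<lambda>(K1, K2). K1 \<union> K2) ` (quot L1 ` lists Alph \<times> quot L2 ` lists Alph)"
  proof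
    fix M assume "M \<in> quot (L1 \<union> L2) ` lists Alph"
    then obtain u where u: "u \<in> lists Alph" "M = quot (L1 \<union> L2) u" by auto
    then have "M = (\<lambda>(K1, K2). K1 \<union> K2) (quot L1 u, quot L2 u)" by (auto simp: quot_def)
    then show "M \<in> (\<lambda>(K1, K2). K1 \<union> K2) ` (quot L1 ` lists Alph \<times> quot L2 ` lists Alph)"
      using u(1) by blast
  qed
  moreover have "L1 \<union> L2 \<subseteq> lists Alph" using assms by (simp add: fq_def)
  moreover have "finite ((\<lambda>(K1, K2). K1 \<union> K2) ` (quot L1 ` lists Alph \<times> quot L2 ` lists Alph))"
    by (rule finite_imageI, rule finite_SigmaI) (use assms in \<open>auto simp: fq_def\<close>)
  ultimately show ?thesis by (rule fqI)
qed

lemma quot_conc: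
  "quot (conc L1 L2) u = conc (quot L1 u) L2 \<union> \<Union> {quot L2 v | v. \<exists>x. u = x @ v \<and> x \<in> L1}"
proof (rule Set.set_eqI, rule iffI)
  fix w assume "w \<in> quot (conc L1 L2) u"
  then obtain a b where ab: "u @ w = a @ b" "a \<in> L1" "b \<in> L2" by (auto simp: quot_def conc_def)
  then obtain us where "u = a @ us \<and> us @ w = b \<or> u @ us = a \<and> w = us @ b"
    using append_eq_append_conv2[of u w a b] by blast
  then show "w \<in> conc (quot L1 u) L2 \<union> \<Union> {quot L2 v | v. \<exists>x. u = x @ v \<and> x \<in> L1}"
  proof
    assume h: "u = a @ us \<and> us @ w = b"
    then have "w \<in> quot L2 us" using ab by (simp add: quot_def)
    moreover have "quot L2 us \<in> {quot L2 v | v. \<exists>x. u = x @ v \<and> x \<in> L1}"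
      using h ab by blast
    ultimately show ?thesis by (intro UnI2 UnionI)
  next
    assume h: "u @ us = a \<and> w = us @ b"
    then have "w \<in> conc (quot L1 u) L2" using ab unfolding conc_def quot_def by auto
    then show ?thesis by (rule UnI1)
  qed
next
  fix w assume "w \<in> conc (quot L1 u) L2 \<union> \<Union> {quot L2 v | v. \<exists>x. u = x @ v \<and> x \<in> L1}"
  then show "w \<in> quot (conc L1 L2) u"
  proof
    assume "w \<in> conc (quot L1 u) L2"
    then obtain a b where "w = a @ b" "u @ a \<in> L1" "b \<in> L2" by (auto simp: conc_def quot_def)
    then have "u @ w = (u @ a) @ b" by simp
    then show ?thesis using \<open>u @ a \<in> L1\<close> \<open>b \<in> L2\<close> unfolding quot_def conc_def by blast
  next
    assume "w \<in> \<Union> {quot L2 v | v. \<exists>x. u = x @ v \<and> x \<in> L1}"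
    then obtain v x where "v @ w \<in> L2" "u = x @ v" "x \<in> L1" by (auto simp: quot_def)
    then have "u @ w = x @ (v @ w)" by simp
    then show ?thesis using \<open>v @ w \<in> L2\<close> \<open>x \<in> L1\<close> unfolding quot_def conc_def by blast
  qed
qed

lemma fq_conc: assumes "fq Alph L1" "fq Alph L2" shows "fq Alph (conc L1 L2)"
proof -
  let ?Q1 = "quot L1 ` lists Alph" and ?Q2 = "quot L2 ` lists Alph"
  let ?F = "\<lambda>(K, S). conc K L2 \<union> \<Union> S"
  have "quot (conc L1 L2) ` lists Alph \<subseteq> ?F ` (?Q1 \<times> Pow ?Q2)"
  proof
    fix M assume "M \<in> quot (conc L1 L2) ` lists Alph"
    then obtain u where u: "u \<in> lists Alph" "M = quot (conc L1 L2) u" by auto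
    let ?S = "{quot L2 v | v. \<exists>x. u = x @ v \<and> x \<in> L1}"
    have "?S \<subseteq> ?Q2"
    proof
      fix K assume "K \<in> ?S"
      then obtain v x where "K = quot L2 v" "u = x @ v" by blast
      then show "K \<in> ?Q2" using u(1) by simp
    qed
    moreover have "quot L1 u \<in> ?Q1" using u(1) by simp
    moreover have "M = ?F (quot L1 u, ?S)" using u(2) by (simp add: quot_conc)
    ultimately show "M \<in> ?F ` (?Q1 \<times> Pow ?Q2)" by (intro rev_image_eqI[of "(quot L1 u, ?S)"]) auto
  qed
  moreover have "conc L1 L2 \<subseteq> lists Alph" using assms unfolding fq_def conc_def by (auto dest!: subsetD)
  moreover have "finite (?F ` (?Q1 \<times> Pow ?Q2))"
    by (rule finite_imageI, rule finite_SigmaI) (use assms in \<open>auto simp: fq_def\<close>)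
  ultimately show ?thesis by (rule fqI)
qed

lemma kstar_append: "u \<in> kstar L \<Longrightarrow> v \<in> kstar L \<Longrightarrow> u @ v \<in> kstar L"
  by (induction rule: kstar.induct) (auto intro: kstar.intros)

lemma kstar_lists: "L \<subseteq> lists Alph \<Longrightarrow> kstar L \<subseteq> lists Alph"
proof
  fix w assume L: "L \<subseteq> lists Alph" and "w \<in> kstar L"
  from this(2) show "w \<in> lists Alph" by (induction rule: kstar.induct) (use L in auto)
qed

lemma quot_kstar_aux:
  assumes "w0 \<in> kstar L"
  shows "\<And>u w. w0 = u @ w \<Longrightarrow> u \<noteq> [] \<Longrightarrow>
    \<exists>x v w1 w2. u = x @ v \<and> x \<in> kstar L \<and> v \<noteq> [] \<and> w = w1 @ w2 \<and> v @ w1 \<in> L \<and> w2 \<in> kstar L"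
  using assms
proof (induction rule: kstar.induct)
  case kstar_nil
  then show ?case by simp
next
  case (kstar_app a b)
  show ?case
  proof (cases "length u \<le> length a")
    case True
    then obtain w1 where "a = u @ w1" "w = w1 @ b" using kstar_app.prems(1)
      by (metis append_eq_append_conv_if append_take_drop_id)
    then show ?thesis using kstar_app.prems(2) kstar_app.hyps kstar.kstar_nil[of L]
      by (metis append_Nil)
  next
    case False
    then obtain u' where u': "u = a @ u'" "u' \<noteq> []" "b = u' @ w" using kstar_app.prems(1)
      by (metis append_Nil2 append_eq_append_conv_if append_take_drop_id nle_le)
    from kstar_app.IH[OF u'(3) u'(2)] obtain x v w1 w2 where
      "u' = x @ v" "x \<in> kstar L" "v \<noteq> []" "w = w1 @ w2" "v @ w1 \<in> L" "w2 \<in> kstar L" by blast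
    then show ?thesis using u' kstar_app.hyps(1) kstar.kstar_app[of a L x]
      by (metis append.assoc)
  qed
qed

lemma quot_kstar:
  assumes "u \<noteq> []"
  shows "quot (kstar L) u = \<Union> {conc (quot L v) (kstar L) | v. \<exists>x. u = x @ v \<and> x \<in> kstar L \<and> v \<noteq> []}"
proof (rule Set.set_eqI, rule iffI)
  fix w assume "w \<in> quot (kstar L) u"
  then have "u @ w \<in> kstar L" by (simp add: quot_def)
  from quot_kstar_aux[OF this refl assms] obtain x v w1 w2 where
    "u = x @ v" "x \<in> kstar L" "v \<noteq> []" "w = w1 @ w2" "v @ w1 \<in> L" "w2 \<in> kstar L" by blast
  then show "w \<in> \<Union> {conc (quot L v) (kstar L) | v. \<exists>x. u = x @ v \<and> x \<in> kstar L \<and> v \<noteq> []}"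
    by (auto simp: conc_def quot_def)
next
  fix w assume "w \<in> \<Union> {conc (quot L v) (kstar L) | v. \<exists>x. u = x @ v \<and> x \<in> kstar L \<and> v \<noteq> []}"
  then obtain x v w1 w2 where
    "u = x @ v" "x \<in> kstar L" "w = w1 @ w2" "v @ w1 \<in> L" "w2 \<in> kstar L"
    by (auto simp: conc_def quot_def)
  then have "u @ w = x @ ((v @ w1) @ w2)" by simp
  moreover have "(v @ w1) @ w2 \<in> kstar L" using \<open>v @ w1 \<in> L\<close> \<open>w2 \<in> kstar L\<close> by (rule kstar.kstar_app)
  ultimately show "w \<in> quot (kstar L) u" using \<open>x \<in> kstar L\<close> kstar_append by (fastforce simp: quot_def)
qed

lemma fq_kstar: assumes "fq Alph L" shows "fq Alph (kstar L)"
proof -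
  let ?Q = "quot L ` lists Alph"
  have "quot (kstar L) ` lists Alph \<subseteq> insert (kstar L) ((\<lambda>S. \<Union>K\<in>S. conc K (kstar L)) ` Pow ?Q)"
  proof
    fix M assume "M \<in> quot (kstar L) ` lists Alph"
    then obtain u where u: "u \<in> lists Alph" "M = quot (kstar L) u" by auto
    show "M \<in> insert (kstar L) ((\<lambda>S. \<Union>K\<in>S. conc K (kstar L)) ` Pow ?Q)"
    proof (cases "u = []")
      case True then show ?thesis using u by (simp add: quot_def)
    next
      case False
      let ?S = "{quot L v | v. \<exists>x. u = x @ v \<and> x \<in> kstar L \<and> v \<noteq> []}"
      have "?S \<subseteq> ?Q" using u(1) by auto
      moreover have "M = (\<Union>K\<in>?S. conc K (kstar L))" using u quot_kstar[OF False] by auto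
      ultimately show ?thesis by blast
    qed
  qed
  moreover have "kstar L \<subseteq> lists Alph" using assms kstar_lists by (auto simp: fq_def)
  moreover have "finite (insert (kstar L) ((\<lambda>S. \<Union>K\<in>S. conc K (kstar L)) ` Pow ?Q))"
    by (rule finite.insertI, rule finite_imageI) (use assms in \<open>auto simp: fq_def\<close>)
  ultimately show ?thesis by (rule fqI)
qed

lemma fq_finite_lang: assumes "finite L" "L \<subseteq> lists Alph" shows "fq Alph L"
proof -
  let ?S = "\<Union>w\<in>L. (\<lambda>i. drop i w) ` {..length w}"
  have "quot L ` lists Alph \<subseteq> Pow ?S"
  proof
    fix M assume "M \<in> quot L ` lists Alph"
    then obtain u where "M = quot L u" by auto
    have "v \<in> ?S" if "v \<in> M" for v
    proof -
      have "u @ v \<in> L" using that \<open>M = quot L u\<close> by (simp add: quot_def)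
      moreover have "v = drop (length u) (u @ v)" by simp
      ultimately show ?thesis by fastforce
    qed
    then show "M \<in> Pow ?S" by auto
  qed
  moreover note assms(2)
  moreover have "finite (Pow ?S)" using assms(1) by simp
  ultimately show ?thesis by (rule fqI)
qed

lemma rev_image_iff: "x \<in> rev ` L \<longleftrightarrow> rev x \<in> L"
  by (metis rev_swap image_iff)

lemma fq_map:
  assumes "fq Alph L" "inj_on h Alph" "h ` Alph \<subseteq> Alph'"
  shows "fq Alph' (map h ` L)"
proof -
  have sub: "L \<subseteq> lists Alph" using assms by (simp add: fq_def)
  have injm: "inj_on (map h) (lists Alph)" using assms(2) inj_on_map_lists by blast
  have "quot (map h ` L) ` lists Alph' \<subseteq> insert {} ((\<lambda>K. map h ` K) ` quot L ` lists Alph)"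
  proof
    fix M assume "M \<in> quot (map h ` L) ` lists Alph'"
    then obtain u where u: "M = quot (map h ` L) u" by auto
    show "M \<in> insert {} ((\<lambda>K. map h ` K) ` quot L ` lists Alph)"
    proof (cases "M = {}")
      case True then show ?thesis by simp
    next
      case False
      then obtain w x where x: "x \<in> L" "u @ w = map h x" using u by (auto simp: quot_def)
      then obtain us vs where usvs: "x = us @ vs" "u = map h us" "w = map h vs"
        using append_eq_map_conv[of u w h x] by blast
      have "x \<in> lists Alph" using sub x(1) by blast
      then have "us \<in> lists Alph" using usvs by simp
      then obtain u0 where u0: "u = map h u0" "u0 \<in> lists Alph"
        using usvs by blast
      have "M = map h ` quot L u0"
      proof (rule Set.set_eqI, rule iffI)
        fix y assume "y \<in> M"
        then obtain z where z: "z \<in> L" "u @ y = map h z" using u by (auto simp: quot_def)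
        then obtain z1 z2 where zz: "z = z1 @ z2" "u = map h z1" "y = map h z2"
          using append_eq_map_conv[of u y h z] by blast
        have "z \<in> lists Alph" using sub z(1) by blast
        then have "z1 \<in> lists Alph" using zz by simp
        then have "z1 = u0" using injm zz(2) u0 by (metis inj_onD)
        then show "y \<in> map h ` quot L u0" using zz z by (auto simp: quot_def)
      next
        fix y assume "y \<in> map h ` quot L u0"
        then show "y \<in> M" using u u0 by (auto simp: quot_def simp flip: map_append)
      qed
      then show ?thesis using u0 by auto
    qed
  qed
  moreover have "map h ` L \<subseteq> lists Alph'" using sub assms(3) by (auto dest!: subsetD)
  moreover have "finite (insert {} ((\<lambda>K. map h ` K) ` quot L ` lists Alph))"
    by (rule finite.insertI, rule finite_imageI) (use assms in \<open>auto simp: fq_def\<close>)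
  ultimately show ?thesis by (rule fqI)
qed

lemma fq_rev:
  assumes "fq Alph L" shows "fq Alph (rev ` L)"
proof -
  obtain Sts q0 Acc \<delta> where fin: "finite (Sts::nat set)" and q0: "q0 \<in> Sts"
    and cl: "\<forall>q\<in>Sts. \<forall>c\<in>Alph. \<delta> q c \<in> Sts"
    and L: "L = {w \<in> lists Alph. foldl \<delta> q0 w \<in> Acc}"
    using fq_regular[OF assms] unfolding regular_language_def by blast
  have inS: "foldl \<delta> q u \<in> Sts" if "u \<in> lists Alph" "q \<in> Sts" for u q
    using that by (induction u arbitrary: q) (use cl in auto)
  have "quot (rev ` L) ` lists Alph \<subseteq>
     (\<lambda>S. rev ` {x \<in> lists Alph. foldl \<delta> q0 x \<in> S}) ` Pow Sts"
  proof
    fix M assume "M \<in> quot (rev ` L) ` lists Alph"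
    then obtain u where u: "u \<in> lists Alph" "M = quot (rev ` L) u" by auto
    let ?S = "{q \<in> Sts. foldl \<delta> q (rev u) \<in> Acc}"
    have "M = {w. rev w @ rev u \<in> L}"
      using u(2) unfolding quot_def by (simp add: rev_image_iff)
    also have "\<dots> = rev ` {x \<in> lists Alph. foldl \<delta> q0 x \<in> ?S}"
    proof (rule Set.set_eqI)
      fix w
      have "w \<in> rev ` {x \<in> lists Alph. foldl \<delta> q0 x \<in> ?S} \<longleftrightarrow> rev w \<in> lists Alph \<and> foldl \<delta> q0 (rev w) \<in> ?S"
        by (simp add: rev_image_iff)
      also have "\<dots> \<longleftrightarrow> rev w @ rev u \<in> L"
        using u(1) inS q0 by (auto simp: L)
      finally show "w \<in> {w. rev w @ rev u \<in> L} \<longleftrightarrow> w \<in> rev ` {x \<in> lists Alph. foldl \<delta> q0 x \<in> ?S}"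
        by simp
    qed
    finally show "M \<in> (\<lambda>S. rev ` {x \<in> lists Alph. foldl \<delta> q0 x \<in> S}) ` Pow Sts" by blast
  qed
  moreover have "rev ` L \<subseteq> lists Alph" using L by auto
  moreover have "finite ((\<lambda>S. rev ` {x \<in> lists Alph. foldl \<delta> q0 x \<in> S}) ` Pow Sts)" using fin by simp
  ultimately show ?thesis by (rule fqI)
qed




lemma same_factor_iff: "same_factor x y \<longleftrightarrow> (isl x \<longleftrightarrow> isl y)"
  by (cases x; cases y) auto

fun lok :: "('a, 'm) monoid_scheme \<Rightarrow> ('b, 'n) monoid_scheme \<Rightarrow> 'a + 'b \<Rightarrow> bool" where
  "lok A B (Inl a) \<longleftrightarrow> a \<in> carrier A"
| "lok A B (Inr b) \<longleftrightarrow> b \<in> carrier B"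

fun ltriv :: "('a, 'm) monoid_scheme \<Rightarrow> ('b, 'n) monoid_scheme \<Rightarrow> 'a + 'b \<Rightarrow> bool" where
  "ltriv A B (Inl a) \<longleftrightarrow> a = \<one>\<^bsub>A\<^esub>"
| "ltriv A B (Inr b) \<longleftrightarrow> b = \<one>\<^bsub>B\<^esub>"

fun lmul :: "('a, 'm) monoid_scheme \<Rightarrow> ('b, 'n) monoid_scheme \<Rightarrow> 'a + 'b \<Rightarrow> 'a + 'b \<Rightarrow> 'a + 'b" where
  "lmul A B (Inl a) (Inl a') = Inl (a \<otimes>\<^bsub>A\<^esub> a')"
| "lmul A B (Inr b) (Inr b') = Inr (b \<otimes>\<^bsub>B\<^esub> b')"
| "lmul A B x y = x"

fun linv :: "('a, 'm) monoid_scheme \<Rightarrow> ('b, 'n) monoid_scheme \<Rightarrow> 'a + 'b \<Rightarrow> 'a + 'b" where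
  "linv A B (Inl a) = Inl (inv\<^bsub>A\<^esub> a)"
| "linv A B (Inr b) = Inr (inv\<^bsub>B\<^esub> b)"

definition gcons :: "('a, 'm) monoid_scheme \<Rightarrow> ('b, 'n) monoid_scheme \<Rightarrow> 'a + 'b \<Rightarrow> ('a + 'b) list \<Rightarrow> ('a + 'b) list" where
  "gcons A B x w = (if ltriv A B x then w else fp_cons A B x w)"

definition fp_inv :: "('a, 'm) monoid_scheme \<Rightarrow> ('b, 'n) monoid_scheme \<Rightarrow> ('a + 'b) list \<Rightarrow> ('a + 'b) list" where
  "fp_inv A B w = rev (map (linv A B) w)"

lemma isl_linv [simp]: "isl (linv A B x) = isl x"
  by (cases x) auto

lemma fp_letter_iff: "fp_letter A B x \<longleftrightarrow> lok A B x \<and> \<not> ltriv A B x"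
  by (cases x) auto

lemma red_Nil [simp]: "fp_reduced A B []"
  by (simp add: fp_reduced_def)

lemma red_Cons:
  "fp_reduced A B (x # w) \<longleftrightarrow> fp_letter A B x \<and> fp_reduced A B w \<and> (w = [] \<or> \<not> same_factor x (hd w))"
proof
  assume h: "fp_reduced A B (x # w)"
  have "fp_reduced A B w"
    unfolding fp_reduced_def
  proof (intro conjI allI impI)
    show "\<forall>y\<in>set w. fp_letter A B y" using h by (simp add: fp_reduced_def)
    fix i assume "Suc i < length w"
    then have "Suc (Suc i) < length (x # w)" by simp
    then show "\<not> same_factor (w ! i) (w ! Suc i)" using h unfolding fp_reduced_def by fastforce
  qed
  moreover have "w = [] \<or> \<not> same_factor x (hd w)"
  proof (cases w)
    case (Cons y w')
    then have "Suc 0 < length (x # w)" by simp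
    then show ?thesis using h Cons unfolding fp_reduced_def by fastforce
  qed simp
  ultimately show "fp_letter A B x \<and> fp_reduced A B w \<and> (w = [] \<or> \<not> same_factor x (hd w))"
    using h by (simp add: fp_reduced_def)
next
  assume h: "fp_letter A B x \<and> fp_reduced A B w \<and> (w = [] \<or> \<not> same_factor x (hd w))"
  show "fp_reduced A B (x # w)"
    unfolding fp_reduced_def
  proof (intro conjI allI impI)
    show "\<forall>y\<in>set (x # w). fp_letter A B y" using h by (simp add: fp_reduced_def)
    fix i assume i: "Suc i < length (x # w)"
    show "\<not> same_factor ((x # w) ! i) ((x # w) ! Suc i)"
    proof (cases i)
      case 0
      then show ?thesis using h i by (cases w) auto
    next
      case (Suc j)
      then show ?thesis using h i unfolding fp_reduced_def by auto
    qed
  qed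
qed

lemma red_append:
  "fp_reduced A B (u @ v) \<longleftrightarrow> fp_reduced A B u \<and> fp_reduced A B v \<and>
     (u = [] \<or> v = [] \<or> \<not> same_factor (last u) (hd v))"
proof (induction u)
  case Nil then show ?case by simp
next
  case (Cons x u)
  show ?case
  proof (cases u)
    case Nil then show ?thesis by (simp add: red_Cons)
  next
    case (Cons y u')
    then show ?thesis using Cons.IH by (auto simp: red_Cons)
  qed
qed

lemma red_snoc:
  "fp_reduced A B (u @ [x]) \<longleftrightarrow> fp_reduced A B u \<and> fp_letter A B x \<and> (u = [] \<or> \<not> same_factor (last u) x)"
  by (simp add: red_append red_Cons)

lemma fc_nomerge: "w = [] \<or> \<not> same_factor x (hd w) \<Longrightarrow> fp_cons A B x w = x # w"
  by (cases x; cases w; cases "hd w") auto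

lemma mult_F: "x \<otimes>\<^bsub>free_product A B\<^esub> y = foldr (fp_cons A B) x y"
  by (simp add: free_product_def)
lemma carrier_F: "carrier (free_product A B) = {w. fp_reduced A B w}"
  by (simp add: free_product_def)
lemma one_F: "\<one>\<^bsub>free_product A B\<^esub> = []"
  by (simp add: free_product_def)

lemma foldr_red_append: "fp_reduced A B (p @ u) \<Longrightarrow> foldr (fp_cons A B) p u = p @ u"
proof (induction p)
  case Nil then show ?case by simp
next
  case (Cons x p)
  then have "fp_reduced A B (p @ u)" by (simp add: red_Cons)
  then have "foldr (fp_cons A B) p u = p @ u" using Cons.IH by simp
  moreover have "p @ u = [] \<or> \<not> same_factor x (hd (p @ u))" using Cons.prems by (simp add: red_Cons)
  ultimately show ?case by (simp add: fc_nomerge)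
qed

locale fp2 = A: group A + B: group B for A :: "('a, 'm) monoid_scheme" and B :: "('b, 'n) monoid_scheme"
begin

abbreviation "red \<equiv> fp_reduced A B"
abbreviation "fc \<equiv> fp_cons A B"
abbreviation "F \<equiv> free_product A B"

lemma fc_red:
  assumes "fp_letter A B x" "red w" shows "red (fc x w)"
proof (cases "w = [] \<or> \<not> same_factor x (hd w)")
  case True
  then show ?thesis using assms by (simp add: fc_nomerge red_Cons)
next
  case False
  then obtain y w' where w: "w = y # w'" "same_factor x y" by (cases w) auto
  have w': "red w'" "w' = [] \<or> \<not> same_factor y (hd w')" "fp_letter A B y" using assms(2) w by (auto simp: red_Cons)
  show ?thesis
  proof (cases x)
    case (Inl a)
    then obtain a' where y: "y = Inl a'" using w(2) by (cases y) auto
    show ?thesis using w w' assms(1) Inl y by (auto simp: red_Cons Let_def same_factor_iff)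
  next
    case (Inr b)
    then obtain b' where y: "y = Inr b'" using w(2) by (cases y) auto
    show ?thesis using w w' assms(1) Inr y by (auto simp: red_Cons Let_def same_factor_iff)
  qed
qed

lemma gcons_red: "lok A B x \<Longrightarrow> red w \<Longrightarrow> red (gcons A B x w)"
  by (simp add: gcons_def fc_red fp_letter_iff)

lemma foldr_red: "red u \<Longrightarrow> red v \<Longrightarrow> red (foldr fc u v)"
proof (induction u)
  case Nil then show ?case by simp
next
  case (Cons x u)
  then show ?case by (simp add: red_Cons fc_red)
qed

lemma gg_l:
  assumes a: "a \<in> carrier A" and a': "a' \<in> carrier A" and z: "red z"
  shows "gcons A B (Inl a) (gcons A B (Inl a') z) = gcons A B (Inl (a \<otimes>\<^bsub>A\<^esub> a')) z"
proof (cases "a = \<one>\<^bsub>A\<^esub> \<or> a' = \<one>\<^bsub>A\<^esub>")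
  case True
  then show ?thesis using a a' by (auto simp: gcons_def)
next
  case False
  then have na: "a \<noteq> \<one>\<^bsub>A\<^esub>" and na': "a' \<noteq> \<one>\<^bsub>A\<^esub>" by auto
  show ?thesis
  proof (cases "\<exists>c z'. z = Inl c # z'")
    case False
    then have nm: "z = [] \<or> \<not> same_factor (Inl a') (hd z)"
      by (cases z; cases "hd z") auto
    have nm2: "z = [] \<or> \<not> same_factor (Inl (a \<otimes>\<^bsub>A\<^esub> a')) (hd z)"
      using nm by (cases z; cases "hd z") auto
    show ?thesis using na na' nm nm2 by (simp add: gcons_def fc_nomerge Let_def)
  next
    case True
    then obtain c z' where zc: "z = Inl c # z'" by blast
    have c: "c \<in> carrier A" "c \<noteq> \<one>\<^bsub>A\<^esub>" and z': "red z'" "z' = [] \<or> \<not> same_factor (Inl c) (hd z')"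
      using z zc by (auto simp: red_Cons)
    have nm: "z' = [] \<or> \<not> same_factor (Inl e) (hd z')" for e
      using z'(2) by (cases z'; cases "hd z'") auto
    show ?thesis
    proof (cases "a' \<otimes>\<^bsub>A\<^esub> c = \<one>\<^bsub>A\<^esub>")
      case True
      have lhs: "gcons A B (Inl a) (gcons A B (Inl a') z) = Inl a # z'"
        using na na' True zc nm by (simp add: gcons_def fc_nomerge)
      show ?thesis
      proof (cases "a \<otimes>\<^bsub>A\<^esub> a' = \<one>\<^bsub>A\<^esub>")
        case True2: True
        have "a = c" using True True2 a a' c
          by (metis A.inv_equality A.inv_inv A.m_closed)
        then show ?thesis using lhs True2 zc by (simp add: gcons_def)
      next
        case False2: False
        have "a \<otimes>\<^bsub>A\<^esub> a' \<otimes>\<^bsub>A\<^esub> c = a" using True a a' c by (simp add: A.m_assoc)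
        then show ?thesis using lhs False2 zc na by (simp add: gcons_def Let_def)
      qed
    next
      case False
      have lhs: "gcons A B (Inl a) (gcons A B (Inl a') z) =
          (if a \<otimes>\<^bsub>A\<^esub> (a' \<otimes>\<^bsub>A\<^esub> c) = \<one>\<^bsub>A\<^esub> then z' else Inl (a \<otimes>\<^bsub>A\<^esub> (a' \<otimes>\<^bsub>A\<^esub> c)) # z')"
        using na na' False zc by (simp add: gcons_def Let_def)
      show ?thesis
      proof (cases "a \<otimes>\<^bsub>A\<^esub> a' = \<one>\<^bsub>A\<^esub>")
        case True2: True
        have "a \<otimes>\<^bsub>A\<^esub> (a' \<otimes>\<^bsub>A\<^esub> c) = c" using True2 a a' c by (simp flip: A.m_assoc)
        then show ?thesis using lhs True2 zc c by (simp add: gcons_def)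
      next
        case False2: False
        then show ?thesis using lhs zc a a' c by (simp add: gcons_def Let_def A.m_assoc)
      qed
    qed
  qed
qed

lemma gg_r:
  assumes a: "a \<in> carrier B" and a': "a' \<in> carrier B" and z: "red z"
  shows "gcons A B (Inr a) (gcons A B (Inr a') z) = gcons A B (Inr (a \<otimes>\<^bsub>B\<^esub> a')) z"
proof (cases "a = \<one>\<^bsub>B\<^esub> \<or> a' = \<one>\<^bsub>B\<^esub>")
  case True
  then show ?thesis using a a' by (auto simp: gcons_def)
next
  case False
  then have na: "a \<noteq> \<one>\<^bsub>B\<^esub>" and na': "a' \<noteq> \<one>\<^bsub>B\<^esub>" by auto
  show ?thesis
  proof (cases "\<exists>c z'. z = Inr c # z'")
    case False
    then have nm: "z = [] \<or> \<not> same_factor (Inr a') (hd z)"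
      by (cases z; cases "hd z") auto
    have nm2: "z = [] \<or> \<not> same_factor (Inr (a \<otimes>\<^bsub>B\<^esub> a')) (hd z)"
      using nm by (cases z; cases "hd z") auto
    show ?thesis using na na' nm nm2 by (simp add: gcons_def fc_nomerge Let_def)
  next
    case True
    then obtain c z' where zc: "z = Inr c # z'" by blast
    have c: "c \<in> carrier B" "c \<noteq> \<one>\<^bsub>B\<^esub>" and z': "red z'" "z' = [] \<or> \<not> same_factor (Inr c) (hd z')"
      using z zc by (auto simp: red_Cons)
    have nm: "z' = [] \<or> \<not> same_factor (Inr e) (hd z')" for e
      using z'(2) by (cases z'; cases "hd z'") auto
    show ?thesis
    proof (cases "a' \<otimes>\<^bsub>B\<^esub> c = \<one>\<^bsub>B\<^esub>")
      case True
      have lhs: "gcons A B (Inr a) (gcons A B (Inr a') z) = Inr a # z'"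
        using na na' True zc nm by (simp add: gcons_def fc_nomerge)
      show ?thesis
      proof (cases "a \<otimes>\<^bsub>B\<^esub> a' = \<one>\<^bsub>B\<^esub>")
        case True2: True
        have "a = c" using True True2 a a' c
          by (metis B.inv_equality B.inv_inv B.m_closed)
        then show ?thesis using lhs True2 zc by (simp add: gcons_def)
      next
        case False2: False
        have "a \<otimes>\<^bsub>B\<^esub> a' \<otimes>\<^bsub>B\<^esub> c = a" using True a a' c by (simp add: B.m_assoc)
        then show ?thesis using lhs False2 zc na by (simp add: gcons_def Let_def)
      qed
    next
      case False
      have lhs: "gcons A B (Inr a) (gcons A B (Inr a') z) =
          (if a \<otimes>\<^bsub>B\<^esub> (a' \<otimes>\<^bsub>B\<^esub> c) = \<one>\<^bsub>B\<^esub> then z' else Inr (a \<otimes>\<^bsub>B\<^esub> (a' \<otimes>\<^bsub>B\<^esub> c)) # z')"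
        using na na' False zc by (simp add: gcons_def Let_def)
      show ?thesis
      proof (cases "a \<otimes>\<^bsub>B\<^esub> a' = \<one>\<^bsub>B\<^esub>")
        case True2: True
        have "a \<otimes>\<^bsub>B\<^esub> (a' \<otimes>\<^bsub>B\<^esub> c) = c" using True2 a a' c by (simp flip: B.m_assoc)
        then show ?thesis using lhs True2 zc c by (simp add: gcons_def)
      next
        case False2: False
        then show ?thesis using lhs zc a a' c by (simp add: gcons_def Let_def B.m_assoc)
      qed
    qed
  qed
qed

lemma gcons_gcons:
  assumes "lok A B x" "lok A B y" "same_factor x y" "red z"
  shows "gcons A B x (gcons A B y z) = gcons A B (lmul A B x y) z"
  using assms gg_l gg_r by (cases x; cases y) auto

lemma lok_lmul: "lok A B x \<Longrightarrow> lok A B y \<Longrightarrow> lok A B (lmul A B x y)"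
  by (cases x; cases y) auto

lemma same_factor_lmul: "same_factor x y \<Longrightarrow> same_factor (lmul A B x y) z \<longleftrightarrow> same_factor x z"
  by (cases x; cases y; cases z) auto

lemma gcons_letter: "fp_letter A B x \<Longrightarrow> gcons A B x w = fc x w"
  by (simp add: gcons_def fp_letter_iff)

lemma action:
  assumes x: "lok A B x" and r: "red r" and w: "red w"
  shows "foldr fc (gcons A B x r) w = gcons A B x (foldr fc r w)"
proof (cases "ltriv A B x")
  case True then show ?thesis by (simp add: gcons_def)
next
  case nt: False
  show ?thesis
  proof (cases "r = [] \<or> \<not> same_factor x (hd r)")
    case True
    then show ?thesis using nt by (simp add: gcons_def fc_nomerge)
  next
    case False
    then obtain y r' where rr: "r = y # r'" "same_factor x y" by (cases r) auto
    have y: "fp_letter A B y" and r': "red r'" "r' = [] \<or> \<not> same_factor y (hd r')"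
      using r rr by (auto simp: red_Cons)
    let ?z = "lmul A B x y"
    have z: "lok A B ?z" using x y by (simp add: lok_lmul fp_letter_iff)
    have nmz: "r' = [] \<or> \<not> same_factor ?z (hd r')" using rr(2) r'(2) same_factor_lmul[OF rr(2)] by (auto simp: same_factor_iff)
    have "fc x r = gcons A B ?z r'"
    proof (cases x)
      case (Inl a)
      then obtain a' where "y = Inl a'" using rr(2) by (cases y) auto
      then show ?thesis using rr Inl nmz by (simp add: gcons_def Let_def fc_nomerge)
    next
      case (Inr b)
      then obtain b' where "y = Inr b'" using rr(2) by (cases y) auto
      then show ?thesis using rr Inr nmz by (simp add: gcons_def Let_def fc_nomerge)
    qed
    then have lhs: "foldr fc (gcons A B x r) w = foldr fc (gcons A B ?z r') w"
      using nt by (simp add: gcons_def)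
    have "foldr fc (gcons A B ?z r') w = gcons A B ?z (foldr fc r' w)"
    proof (cases "ltriv A B ?z")
      case True then show ?thesis by (simp add: gcons_def)
    next
      case False then show ?thesis using nmz by (simp add: gcons_def fc_nomerge)
    qed
    also have "\<dots> = gcons A B x (gcons A B y (foldr fc r' w))"
      using gcons_gcons[OF x _ rr(2) foldr_red[OF r'(1) w]] y by (simp add: fp_letter_iff)
    also have "\<dots> = gcons A B x (foldr fc r w)"
      using rr y by (simp add: gcons_letter)
    finally show ?thesis using lhs by simp
  qed
qed

lemma foldr_assoc:
  assumes "red u" "red v" "red w"
  shows "foldr fc (foldr fc u v) w = foldr fc u (foldr fc v w)"
  using assms(1)
proof (induction u)
  case Nil then show ?case by simp
next
  case (Cons x u)
  have x: "fp_letter A B x" and u: "red u" using Cons.prems by (auto simp: red_Cons)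
  have "foldr fc (foldr fc (x # u) v) w = foldr fc (gcons A B x (foldr fc u v)) w"
    using x by (simp add: gcons_letter)
  also have "\<dots> = gcons A B x (foldr fc (foldr fc u v) w)"
    using action x foldr_red[OF u assms(2)] assms(3) by (simp add: fp_letter_iff)
  also have "\<dots> = gcons A B x (foldr fc u (foldr fc v w))" using Cons.IH u by simp
  finally show ?case using x by (simp add: gcons_letter)
qed

lemma linv_letter: "fp_letter A B x \<Longrightarrow> fp_letter A B (linv A B x)"
  by (cases x) auto

lemma same_factor_linv: "same_factor (linv A B x) y \<longleftrightarrow> same_factor x y"
  by (cases x; cases y) auto

lemma same_factor_sym: "same_factor x y \<longleftrightarrow> same_factor y x"
  by (cases x; cases y) auto

lemma fp_inv_Cons: "fp_inv A B (x # w) = fp_inv A B w @ [linv A B x]"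
  by (simp add: fp_inv_def)

lemma fp_inv_red: "red w \<Longrightarrow> red (fp_inv A B w)"
proof (induction w)
  case Nil then show ?case by (simp add: fp_inv_def)
next
  case (Cons x w)
  have h: "fp_letter A B x" "red w" "w = [] \<or> \<not> same_factor x (hd w)" using Cons.prems by (auto simp: red_Cons)
  have "w \<noteq> [] \<Longrightarrow> last (fp_inv A B w) = linv A B (hd w)"
    by (cases w) (auto simp: fp_inv_def)
  then have "fp_inv A B w = [] \<or> \<not> same_factor (last (fp_inv A B w)) (linv A B x)"
    using h(3) by (auto simp: fp_inv_def same_factor_iff)
  then show ?case using Cons.IH h by (simp add: fp_inv_Cons red_snoc linv_letter)
qed

lemma fc_linv: "fp_letter A B x \<Longrightarrow> fc (linv A B x) (x # w) = w"
  by (cases x) auto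

lemma fp_inv_mult: "red w \<Longrightarrow> foldr fc (fp_inv A B w) w = []"
proof (induction w)
  case Nil then show ?case by (simp add: fp_inv_def)
next
  case (Cons x w)
  then have "fp_letter A B x" "red w" by (auto simp: red_Cons)
  then show ?case using Cons.IH by (simp add: fp_inv_Cons fc_linv)
qed

lemma F_group: "group F"
proof (rule groupI)
  show "\<And>x y. x \<in> carrier F \<Longrightarrow> y \<in> carrier F \<Longrightarrow> x \<otimes>\<^bsub>F\<^esub> y \<in> carrier F"
    by (simp add: carrier_F mult_F foldr_red)
  show "\<one>\<^bsub>F\<^esub> \<in> carrier F" by (simp add: carrier_F one_F)
  show "\<And>x y z. x \<in> carrier F \<Longrightarrow> y \<in> carrier F \<Longrightarrow> z \<in> carrier F \<Longrightarrow>
      x \<otimes>\<^bsub>F\<^esub> y \<otimes>\<^bsub>F\<^esub> z = x \<otimes>\<^bsub>F\<^esub> (y \<otimes>\<^bsub>F\<^esub> z)"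
    by (simp add: carrier_F mult_F foldr_assoc)
  show "\<And>x. x \<in> carrier F \<Longrightarrow> \<one>\<^bsub>F\<^esub> \<otimes>\<^bsub>F\<^esub> x = x"
    by (simp add: one_F mult_F)
  show "\<And>x. x \<in> carrier F \<Longrightarrow> \<exists>y\<in>carrier F. y \<otimes>\<^bsub>F\<^esub> x = \<one>\<^bsub>F\<^esub>"
    by (auto simp: carrier_F mult_F one_F intro!: bexI[where x = "fp_inv A B _"] fp_inv_red fp_inv_mult)
qed

lemma F_inv: "red w \<Longrightarrow> inv\<^bsub>F\<^esub> w = fp_inv A B w"
  using group.inv_equality[OF F_group, of "fp_inv A B w" w]
  by (simp add: carrier_F mult_F one_F fp_inv_red fp_inv_mult)

end




lemma lo_irrefl: "left_order G lt \<Longrightarrow> x \<in> carrier G \<Longrightarrow> \<not> lt x x"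
  unfolding left_order_def by blast
lemma lo_trans: "left_order G lt \<Longrightarrow> x \<in> carrier G \<Longrightarrow> y \<in> carrier G \<Longrightarrow> z \<in> carrier G \<Longrightarrow> lt x y \<Longrightarrow> lt y z \<Longrightarrow> lt x z"
  unfolding left_order_def by blast
lemma lo_total: "left_order G lt \<Longrightarrow> x \<in> carrier G \<Longrightarrow> y \<in> carrier G \<Longrightarrow> x \<noteq> y \<Longrightarrow> lt x y \<or> lt y x"
  unfolding left_order_def by blast
lemma lo_left: "left_order G lt \<Longrightarrow> g \<in> carrier G \<Longrightarrow> h \<in> carrier G \<Longrightarrow> k \<in> carrier G \<Longrightarrow> lt h k \<Longrightarrow> lt (g \<otimes>\<^bsub>G\<^esub> h) (g \<otimes>\<^bsub>G\<^esub> k)"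
  unfolding left_order_def by blast

lemma lo_pos_mult:
  assumes G: "group G" and lo: "left_order G lt" and g: "g \<in> carrier G" and h: "h \<in> carrier G"
    and pg: "lt \<one>\<^bsub>G\<^esub> g" and ph: "lt \<one>\<^bsub>G\<^esub> h"
  shows "lt \<one>\<^bsub>G\<^esub> (g \<otimes>\<^bsub>G\<^esub> h)"
proof -
  interpret G: group G by fact
  have "lt (g \<otimes>\<^bsub>G\<^esub> \<one>\<^bsub>G\<^esub>) (g \<otimes>\<^bsub>G\<^esub> h)" using lo_left[OF lo g _ h ph] by simp
  then have "lt g (g \<otimes>\<^bsub>G\<^esub> h)" using g by simp
  then show ?thesis using lo_trans[OF lo _ g _ pg] g h by simp
qed

lemma lo_pos_inv:
  assumes G: "group G" and lo: "left_order G lt" and g: "g \<in> carrier G" and ng: "g \<noteq> \<one>\<^bsub>G\<^esub>"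
  shows "lt \<one>\<^bsub>G\<^esub> g \<longleftrightarrow> \<not> lt \<one>\<^bsub>G\<^esub> (inv\<^bsub>G\<^esub> g)"
proof -
  interpret G: group G by fact
  have irr: "\<not> lt \<one>\<^bsub>G\<^esub> \<one>\<^bsub>G\<^esub>" using lo_irrefl[OF lo] by simp
  have "lt \<one>\<^bsub>G\<^esub> g \<or> lt g \<one>\<^bsub>G\<^esub>" using lo_total[OF lo _ g] ng by auto
  moreover have "lt g \<one>\<^bsub>G\<^esub> \<Longrightarrow> lt \<one>\<^bsub>G\<^esub> (inv\<^bsub>G\<^esub> g)"
  proof -
    assume "lt g \<one>\<^bsub>G\<^esub>"
    then have "lt (inv\<^bsub>G\<^esub> g \<otimes>\<^bsub>G\<^esub> g) (inv\<^bsub>G\<^esub> g \<otimes>\<^bsub>G\<^esub> \<one>\<^bsub>G\<^esub>)"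
      using lo_left[OF lo G.inv_closed[OF g] g G.one_closed] by simp
    then show ?thesis using g by simp
  qed
  moreover have "\<not> (lt \<one>\<^bsub>G\<^esub> g \<and> lt \<one>\<^bsub>G\<^esub> (inv\<^bsub>G\<^esub> g))"
    using lo_pos_mult[OF G lo g G.inv_closed[OF g]] irr g by auto
  ultimately show ?thesis by blast
qed

locale fpo = fp2 A B for A :: "('a, 'm) monoid_scheme" and B :: "('b, 'n) monoid_scheme" +
  fixes ltA ltB
  assumes oA: "left_order A ltA" and oB: "left_order B ltB"
begin

fun N :: "'a + 'b \<Rightarrow> int" where
  "N (Inl a) = (if ltA \<one>\<^bsub>A\<^esub> a then 0 else 1)"
| "N (Inr b) = (if ltB \<one>\<^bsub>B\<^esub> b then 0 else 1)"

fun sig :: "('a + 'b) list \<Rightarrow> int" where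
  "sig [] = 0"
| "sig (x # w) = N x - (if isl x \<and> w \<noteq> [] \<and> \<not> isl (hd w) then 1 else 0) + sig w"

definition J :: "('a + 'b) list \<Rightarrow> ('a + 'b) list \<Rightarrow> int" where
  "J p q = (if p \<noteq> [] \<and> q \<noteq> [] \<and> isl (last p) \<and> \<not> isl (hd q) then 1 else 0)"

definition sval :: "('a + 'b) list \<Rightarrow> int" where
  "sval w = (if w = [] then 1 else sig w)"

lemma sig_append: "sig (p @ q) = sig p + sig q - J p q"
proof (induction p)
  case Nil then show ?case by (simp add: J_def)
next
  case (Cons x p)
  show ?case
  proof (cases "p = []")
    case True then show ?thesis by (simp add: J_def)
  next
    case False
    then have "J (x # p) q = J p q" by (simp add: J_def)
    then show ?thesis using Cons.IH False by simp
  qed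
qed

lemma N_linv: "fp_letter A B x \<Longrightarrow> N x + N (linv A B x) = 1"
proof (cases x)
  case (Inl a)
  assume "fp_letter A B x"
  then have "a \<in> carrier A" "a \<noteq> \<one>\<^bsub>A\<^esub>" using Inl by auto
  then have "ltA \<one>\<^bsub>A\<^esub> a \<longleftrightarrow> \<not> ltA \<one>\<^bsub>A\<^esub> (inv\<^bsub>A\<^esub> a)" by (rule lo_pos_inv[OF A.is_group oA])
  then show ?thesis using Inl by simp
next
  case (Inr b)
  assume "fp_letter A B x"
  then have "b \<in> carrier B" "b \<noteq> \<one>\<^bsub>B\<^esub>" using Inr by auto
  then have "ltB \<one>\<^bsub>B\<^esub> b \<longleftrightarrow> \<not> ltB \<one>\<^bsub>B\<^esub> (inv\<^bsub>B\<^esub> b)" by (rule lo_pos_inv[OF B.is_group oB])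
  then show ?thesis using Inr by simp
qed

lemma N_lmul:
  assumes "lok A B x" "lok A B y" "same_factor x y"
  shows "N (lmul A B x y) \<le> N x + N y"
proof (cases x)
  case (Inl a)
  then obtain b where y: "y = Inl b" using assms by (cases y) auto
  have "a \<in> carrier A" "b \<in> carrier A" using assms Inl y by auto
  then have "ltA \<one>\<^bsub>A\<^esub> a \<Longrightarrow> ltA \<one>\<^bsub>A\<^esub> b \<Longrightarrow> ltA \<one>\<^bsub>A\<^esub> (a \<otimes>\<^bsub>A\<^esub> b)"
    using lo_pos_mult[OF A.is_group oA] by blast
  then show ?thesis using Inl y by (simp split: if_splits)
next
  case (Inr a)
  then obtain b where y: "y = Inr b" using assms by (cases y) auto
  have "a \<in> carrier B" "b \<in> carrier B" using assms Inr y by auto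
  then have "ltB \<one>\<^bsub>B\<^esub> a \<Longrightarrow> ltB \<one>\<^bsub>B\<^esub> b \<Longrightarrow> ltB \<one>\<^bsub>B\<^esub> (a \<otimes>\<^bsub>B\<^esub> b)"
    using lo_pos_mult[OF B.is_group oB] by blast
  then show ?thesis using Inr y by (simp split: if_splits)
qed

lemma hd_fp_inv: "r \<noteq> [] \<Longrightarrow> last (fp_inv A B r) = linv A B (hd r)"
  by (cases r) (auto simp: fp_inv_def)

lemma sig_inv: "red r \<Longrightarrow> r \<noteq> [] \<Longrightarrow> sig r + sig (fp_inv A B r) = 1"
proof (induction r)
  case Nil then show ?case by simp
next
  case (Cons x r)
  have x: "fp_letter A B x" and r: "red r" and nm: "r = [] \<or> \<not> same_factor x (hd r)"
    using Cons.prems by (auto simp: red_Cons)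
  show ?case
  proof (cases "r = []")
    case True
    then show ?thesis using N_linv[OF x] by (simp add: fp_inv_def)
  next
    case False
    have IH: "sig r + sig (fp_inv A B r) = 1" using Cons.IH r False by simp
    have "sig (fp_inv A B (x # r)) = sig (fp_inv A B r) + N (linv A B x) - J (fp_inv A B r) [linv A B x]"
      by (simp add: fp_inv_Cons sig_append)
    moreover have "J (fp_inv A B r) [linv A B x] = (if isl (hd r) \<and> \<not> isl x then 1 else 0)"
      using False hd_fp_inv[OF False] by (simp add: J_def fp_inv_def)
    moreover have "sig (x # r) = N x - (if isl x \<and> \<not> isl (hd r) then 1 else 0) + sig r"
      using False by simp
    moreover have "isl x \<noteq> isl (hd r)" using nm False by (simp add: same_factor_iff)
    ultimately show ?thesis using IH N_linv[OF x] by auto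
  qed
qed

lemma linv_linv: "lok A B x \<Longrightarrow> linv A B (linv A B x) = x"
  by (cases x) auto

lemma fp_inv_snoc: "fp_inv A B (r @ [x]) = linv A B x # fp_inv A B r"
  by (simp add: fp_inv_def)

lemma isl_lmul: "same_factor x y \<Longrightarrow> isl (lmul A B x y) = isl x"
  by (cases x; cases y) auto

lemma decomp:
  assumes "red v" "red w"
  shows "\<exists>p r q. w = p @ r \<and> v = fp_inv A B r @ q \<and> (p = [] \<or> q = [] \<or> last p \<noteq> linv A B (hd q))"
  using assms
proof (induction v arbitrary: w)
  case Nil
  show ?case by (rule exI[of _ w], rule exI[of _ "[]"], rule exI[of _ "[]"]) (simp add: fp_inv_def)
next
  case (Cons y v)
  have y: "fp_letter A B y" and v: "red v" using Cons.prems by (auto simp: red_Cons)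
  show ?case
  proof (cases "w \<noteq> [] \<and> last w = linv A B y")
    case True
    then have w: "w = butlast w @ [linv A B y]" by (metis append_butlast_last_id)
    then have "red (butlast w)" using Cons.prems(2) red_append by metis
    from Cons.IH[OF v this] obtain p r q where prq: "butlast w = p @ r" "v = fp_inv A B r @ q"
      "p = [] \<or> q = [] \<or> last p \<noteq> linv A B (hd q)" by blast
    have "w = p @ (r @ [linv A B y])" using w prq by simp
    moreover have "y # v = fp_inv A B (r @ [linv A B y]) @ q"
      using prq y by (simp add: fp_inv_snoc linv_linv fp_letter_iff)
    ultimately show ?thesis using prq(3) by blast
  next
    case False
    show ?thesis
      by (rule exI[of _ w], rule exI[of _ "[]"], rule exI[of _ "y # v"]) (use False in \<open>auto simp: fp_inv_def\<close>)
  qed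
qed

lemma fc_linv': "fp_letter A B x \<Longrightarrow> fc x (linv A B x # q) = q"
  by (cases x) auto

lemma cancel: "red (fp_inv A B r @ q) \<Longrightarrow> red r \<Longrightarrow> foldr fc r (fp_inv A B r @ q) = q"
proof (induction r arbitrary: q)
  case Nil then show ?case by (simp add: fp_inv_def)
next
  case (Cons x r)
  have x: "fp_letter A B x" and r: "red r" using Cons.prems by (auto simp: red_Cons)
  have eq: "fp_inv A B (x # r) @ q = fp_inv A B r @ (linv A B x # q)" by (simp add: fp_inv_Cons)
  have "foldr fc r (fp_inv A B r @ (linv A B x # q)) = linv A B x # q"
    using Cons.IH[of "linv A B x # q"] Cons.prems(1) r eq by simp
  then show ?case using eq x by (simp add: fc_linv')
qed

lemma ltriv_lmul:
  assumes "fp_letter A B x" "fp_letter A B y" "same_factor x y"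
  shows "ltriv A B (lmul A B x y) \<longleftrightarrow> x = linv A B y"
proof (cases x)
  case (Inl a)
  then obtain b where y: "y = Inl b" using assms by (cases y) auto
  have ab: "a \<in> carrier A" "b \<in> carrier A" using assms Inl y by auto
  have "a \<otimes>\<^bsub>A\<^esub> b = \<one>\<^bsub>A\<^esub> \<longleftrightarrow> a = inv\<^bsub>A\<^esub> b"
    using ab A.inv_equality[of a b] A.l_inv[of b] by auto
  then show ?thesis using Inl y by simp
next
  case (Inr a)
  then obtain b where y: "y = Inr b" using assms by (cases y) auto
  have ab: "a \<in> carrier B" "b \<in> carrier B" using assms Inr y by auto
  have "a \<otimes>\<^bsub>B\<^esub> b = \<one>\<^bsub>B\<^esub> \<longleftrightarrow> a = inv\<^bsub>B\<^esub> b"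
    using ab B.inv_equality[of a b] B.l_inv[of b] by auto
  then show ?thesis using Inr y by simp
qed

lemma fc_merge:
  assumes "same_factor x y" "\<not> ltriv A B (lmul A B x y)"
  shows "fc x (y # q) = lmul A B x y # q"
  using assms by (cases x; cases y) (auto simp: Let_def)

lemma J_le: "J p q \<le> 1" and J_ge: "J p q \<ge> 0"
  by (auto simp: J_def)

lemma subadd:
  assumes w: "red w" and v: "red v"
  shows "sval (foldr fc w v) \<le> sval w + sval v"
proof (cases "w = [] \<or> v = []")
  case True
  then show ?thesis
  proof
    assume "w = []" then show ?thesis by (simp add: sval_def)
  next
    assume "v = []"
    then have "foldr fc w v = w" using foldr_red_append[of A B w "[]"] w by simp
    then show ?thesis using \<open>v = []\<close> by (simp add: sval_def)
  qed
next
  case False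
  then have wn: "w \<noteq> []" and vn: "v \<noteq> []" by auto
  obtain p r q where prq: "w = p @ r" "v = fp_inv A B r @ q" "p = [] \<or> q = [] \<or> last p \<noteq> linv A B (hd q)"
    using decomp[OF v w] by blast
  have p: "red p" and r: "red r" using w prq(1) red_append by metis+
  have q: "red q" and ri: "red (fp_inv A B r)" using v prq(2) red_append by metis+
  have m: "foldr fc w v = foldr fc p q"
    using prq cancel[of r q] v r by (simp add: foldr_append)
  have sw: "sval w = sig w" and sv: "sval v = sig v" using wn vn by (simp_all add: sval_def)
  show ?thesis
  proof (cases "p = []")
    case pn: True
    then have rn: "r \<noteq> []" using wn prq by simp
    have inv1: "sig r + sig (fp_inv A B r) = 1" using sig_inv[OF r rn] .
    show ?thesis
    proof (cases "q = []")
      case True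
      then show ?thesis using m pn prq inv1 sw sv by (simp add: sval_def)
    next
      case False
      have "sig v = sig (fp_inv A B r) + sig q - J (fp_inv A B r) q" using prq by (simp add: sig_append)
      then show ?thesis using m pn prq inv1 sw sv False J_le[of "fp_inv A B r" q] by (simp add: sval_def)
    qed
  next
    case pnn: False
    show ?thesis
    proof (cases "q = []")
      case qn: True
      then have rn: "r \<noteq> []" using vn prq by (auto simp: fp_inv_def)
      have inv1: "sig r + sig (fp_inv A B r) = 1" using sig_inv[OF r rn] .
      have "foldr fc p q = p" using foldr_red_append[of A B p "[]"] p qn by simp
      moreover have "sig w = sig p + sig r - J p r" using prq by (simp add: sig_append)
      ultimately show ?thesis using m pnn qn prq inv1 sw sv J_le[of p r] by (simp add: sval_def)
    next
      case qnn: False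
      obtain p' x where px: "p = p' @ [x]" using pnn by (metis append_butlast_last_id)
      obtain y q' where qy: "q = y # q'" using qnn by (cases q) auto
      have x: "fp_letter A B x" and p': "red p'" and jx: "p' = [] \<or> \<not> same_factor (last p') x"
        using p px by (auto simp: red_snoc)
      have y: "fp_letter A B y" and q': "red q'" and jy: "q' = [] \<or> \<not> same_factor y (hd q')"
        using q qy by (auto simp: red_Cons)
      have rsplit: "r \<noteq> [] \<Longrightarrow> isl x \<noteq> isl (hd r) \<and> isl (hd r) \<noteq> isl y"
      proof -
        assume rn: "r \<noteq> []"
        have "\<not> same_factor (last p) (hd r)" using w prq(1) pnn rn red_append by metis
        moreover have "\<not> same_factor (last (fp_inv A B r)) (hd q)"
          using v prq(2) qnn rn red_append by (metis fp_inv_def list.map_disc_iff rev_is_Nil_conv)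
        ultimately show "isl x \<noteq> isl (hd r) \<and> isl (hd r) \<noteq> isl y"
          using px qy hd_fp_inv[OF rn] by (simp add: same_factor_iff)
      qed
      show ?thesis
      proof (cases "same_factor x y")
        case False
        have rn: "r = []"
        proof (rule ccontr)
          assume "r \<noteq> []"
          then show False using rsplit False by (simp add: same_factor_iff)
        qed
        have "red (p @ q)" using p q px qy False red_append[of A B p q] by simp
        then have "foldr fc p q = p @ q" by (rule foldr_red_append)
        moreover have "sig (p @ q) = sig p + sig q - J p q" by (rule sig_append)
        ultimately show ?thesis using m rn prq sw sv J_ge[of p q] pnn by (simp add: sval_def fp_inv_def)
      next
        case True
        let ?z = "lmul A B x y"
        have xy: "x \<noteq> linv A B y" using prq(3) pnn qnn px qy by simp
        then have nz: "\<not> ltriv A B ?z" using ltriv_lmul[OF x y True] by simp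
        have zl: "fp_letter A B ?z" using nz lok_lmul x y by (simp add: fp_letter_iff)
        have iz: "isl ?z = isl x" using isl_lmul[OF True] .
        have fcq: "fc x q = ?z # q'" using fc_merge[OF True nz] qy by simp
        have "red (p' @ ?z # q')"
          using p' q' zl jx jy iz True by (auto simp: red_append red_Cons same_factor_iff)
        then have mm: "foldr fc w v = p' @ ?z # q'"
          using m px fcq foldr_red_append by simp
        have s1: "sig (p' @ ?z # q') = sig p' + sig (?z # q') - J p' (?z # q')" by (rule sig_append)
        have s2: "sig p = sig p' + sig [x] - J p' [x]" using px sig_append by simp
        have s3: "J p' (?z # q') = J p' [x]" using iz by (simp add: J_def)
        have s4: "sig (?z # q') = N ?z - (if isl x \<and> q' \<noteq> [] \<and> \<not> isl (hd q') then 1 else 0) + sig q'"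
          using iz by simp
        have s5: "sig q = N y - (if isl x \<and> q' \<noteq> [] \<and> \<not> isl (hd q') then 1 else 0) + sig q'"
          using qy True by (simp add: same_factor_iff)
        have s6: "N ?z \<le> N x + N y" using N_lmul x y True by (simp add: fp_letter_iff)
        have key: "sig (foldr fc w v) \<le> sig p + sig q" using mm s1 s2 s3 s4 s5 s6 by simp
        have "sig p + sig q \<le> sig w + sig v"
        proof (cases "r = []")
          case True then show ?thesis using prq by (simp add: fp_inv_def)
        next
          case rn: False
          have inv1: "sig r + sig (fp_inv A B r) = 1" using sig_inv[OF r rn] .
          have e1: "sig w = sig p + sig r - J p r" using prq by (simp add: sig_append)
          have e2: "sig v = sig (fp_inv A B r) + sig q - J (fp_inv A B r) q" using prq by (simp add: sig_append)
          have "J p r + J (fp_inv A B r) q = 1"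
            using rsplit[OF rn] px qy rn hd_fp_inv[OF rn] True pnn
            by (auto simp: J_def same_factor_iff fp_inv_def)
          then show ?thesis using e1 e2 inv1 by simp
        qed
        then show ?thesis using key mm sw sv by (simp add: sval_def)
      qed
    qed
  qed
qed

abbreviation "GG \<equiv> F \<times>\<times> integer_group"

definition PC :: "(('a + 'b) list \<times> int) set" where
  "PC = {(w, n). red w \<and> sval w \<le> n}"

definition ltG :: "(('a + 'b) list \<times> int) \<Rightarrow> (('a + 'b) list \<times> int) \<Rightarrow> bool" where
  "ltG g h \<longleftrightarrow> g \<in> carrier GG \<and> h \<in> carrier GG \<and> inv\<^bsub>GG\<^esub> g \<otimes>\<^bsub>GG\<^esub> h \<in> PC"

lemma GG_group: "group GG"
  by (simp add: DirProd_group F_group)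

lemma PC_carrier: "PC \<subseteq> carrier GG"
  by (auto simp: PC_def carrier_F)

lemma PC_mult: "g \<in> PC \<Longrightarrow> h \<in> PC \<Longrightarrow> g \<otimes>\<^bsub>GG\<^esub> h \<in> PC"
  using subadd by (force simp: PC_def mult_F foldr_red)

lemma PC_one: "\<one>\<^bsub>GG\<^esub> \<notin> PC"
  by (simp add: PC_def one_F sval_def)

lemma GG_inv: "red w \<Longrightarrow> inv\<^bsub>GG\<^esub> (w, n) = (fp_inv A B w, - n)"
  by (simp add: F_group F_inv carrier_F)

lemma PC_total:
  assumes "g \<in> carrier GG" "g \<noteq> \<one>\<^bsub>GG\<^esub>" shows "g \<in> PC \<or> inv\<^bsub>GG\<^esub> g \<in> PC"
proof -
  obtain w n where g: "g = (w, n)" "red w" using assms by (cases g) (auto simp: carrier_F)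
  show ?thesis
  proof (cases "w = []")
    case True
    then have "n \<noteq> 0" using assms g by (simp add: one_F)
    then show ?thesis using g True GG_inv[of w n] by (auto simp: PC_def sval_def fp_inv_def)
  next
    case False
    have "sig w + sig (fp_inv A B w) = 1" using sig_inv g False by simp
    moreover have "fp_inv A B w \<noteq> []" using False by (simp add: fp_inv_def)
    ultimately show ?thesis using g False GG_inv[of w n] fp_inv_red[of w]
      by (auto simp: PC_def sval_def)
  qed
qed

lemma ltG_left_order: "left_order GG ltG"
proof -
  interpret GG: group GG by (rule GG_group)
  show ?thesis
    unfolding left_order_def
  proof (intro conjI ballI impI)
    fix x assume "x \<in> carrier GG"
    then show "\<not> ltG x x" using PC_one by (simp add: ltG_def)
  next
    fix x y z assume xyz: "x \<in> carrier GG" "y \<in> carrier GG" "z \<in> carrier GG" and "ltG x y" "ltG y z"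
    then have "(inv\<^bsub>GG\<^esub> x \<otimes>\<^bsub>GG\<^esub> y) \<otimes>\<^bsub>GG\<^esub> (inv\<^bsub>GG\<^esub> y \<otimes>\<^bsub>GG\<^esub> z) \<in> PC"
      using PC_mult by (simp add: ltG_def)
    moreover have "(inv\<^bsub>GG\<^esub> x \<otimes>\<^bsub>GG\<^esub> y) \<otimes>\<^bsub>GG\<^esub> (inv\<^bsub>GG\<^esub> y \<otimes>\<^bsub>GG\<^esub> z) = inv\<^bsub>GG\<^esub> x \<otimes>\<^bsub>GG\<^esub> z"
      using xyz by (simp del: carrier_DirProd one_DirProd mult_DirProd add: GG.m_assoc GG.r_inv flip: GG.m_assoc[of y])
    ultimately show "ltG x z" using xyz by (simp add: ltG_def)
  next
    fix x y assume xy: "x \<in> carrier GG" "y \<in> carrier GG" "x \<noteq> y"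
    let ?g = "inv\<^bsub>GG\<^esub> x \<otimes>\<^bsub>GG\<^esub> y"
    have g: "?g \<in> carrier GG" using xy by (simp del: carrier_DirProd)
    have "?g \<noteq> \<one>\<^bsub>GG\<^esub>" using xy by (metis GG.inv_equality GG.inv_inv GG.l_inv GG.inv_closed GG.m_closed)
    then have "?g \<in> PC \<or> inv\<^bsub>GG\<^esub> ?g \<in> PC" using PC_total g by blast
    moreover have "inv\<^bsub>GG\<^esub> ?g = inv\<^bsub>GG\<^esub> y \<otimes>\<^bsub>GG\<^esub> x" using xy by (simp del: carrier_DirProd one_DirProd mult_DirProd add: GG.inv_mult_group)
    ultimately show "ltG x y \<or> ltG y x" using xy by (auto simp: ltG_def)
  next
    fix g h k assume ghk: "g \<in> carrier GG" "h \<in> carrier GG" "k \<in> carrier GG" and "ltG h k"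
    have "inv\<^bsub>GG\<^esub> (g \<otimes>\<^bsub>GG\<^esub> h) \<otimes>\<^bsub>GG\<^esub> (g \<otimes>\<^bsub>GG\<^esub> k) = inv\<^bsub>GG\<^esub> h \<otimes>\<^bsub>GG\<^esub> k"
      using ghk by (simp del: carrier_DirProd one_DirProd mult_DirProd add: GG.inv_mult_group GG.m_assoc flip: GG.m_assoc[of "inv\<^bsub>GG\<^esub> g"])
    then show "ltG (g \<otimes>\<^bsub>GG\<^esub> h) (g \<otimes>\<^bsub>GG\<^esub> k)" using ghk \<open>ltG h k\<close> by (simp del: carrier_DirProd one_DirProd mult_DirProd add: ltG_def)
  qed
qed

lemma ltG_cone: "positive_cone GG ltG = PC"
proof -
  interpret GG: group GG by (rule GG_group)
  show ?thesis using PC_carrier by (auto simp del: carrier_DirProd one_DirProd mult_DirProd simp: positive_cone_def ltG_def)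
qed

end




locale rlo = fpo A B ltA ltB
  for A :: "('a, 'm) monoid_scheme" and B :: "('b, 'n) monoid_scheme" and ltA ltB +
  fixes AlphA \<pi>A LA AlphB \<pi>B LB
  assumes finA: "finite AlphA" and homA: "word_monoid_hom AlphA A \<pi>A"
    and ontoA: "\<pi>A ` lists AlphA = carrier A" and regA: "regular_language AlphA LA"
    and coneA: "\<pi>A ` LA = positive_cone A ltA"
  assumes finB: "finite AlphB" and homB: "word_monoid_hom AlphB B \<pi>B"
    and ontoB: "\<pi>B ` lists AlphB = carrier B" and regB: "regular_language AlphB LB"
    and coneB: "\<pi>B ` LB = positive_cone B ltB"
begin

definition "hA0 c = 6 * c"
definition "hA1 c = 6 * c + 1"
definition "hB0 c = 6 * c + 2"
definition "hB1 c = 6 * c + 3"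

definition "Alph = hA0 ` AlphA \<union> hA1 ` AlphA \<union> hB0 ` AlphB \<union> hB1 ` AlphB \<union> {4, 5}"

definition embA :: "'a \<Rightarrow> ('a + 'b) list" where "embA a = (if a = \<one>\<^bsub>A\<^esub> then [] else [Inl a])"
definition embB :: "'b \<Rightarrow> ('a + 'b) list" where "embB b = (if b = \<one>\<^bsub>B\<^esub> then [] else [Inr b])"

definition ev :: "nat \<Rightarrow> ('a + 'b) list \<times> int" where
  "ev n = (if n = 4 then ([], 1) else if n = 5 then ([], -1)
     else if n mod 6 = 0 then (embA (\<pi>A [n div 6]), 0)
     else if n mod 6 = 1 then (embA (inv\<^bsub>A\<^esub> (\<pi>A [n div 6])), 0)
     else if n mod 6 = 2 then (embB (\<pi>B [n div 6]), 0)
     else (embB (inv\<^bsub>B\<^esub> (\<pi>B [n div 6])), 0))"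

definition pi :: "nat list \<Rightarrow> ('a + 'b) list \<times> int" where
  "pi w = foldr (\<lambda>c g. ev c \<otimes>\<^bsub>GG\<^esub> g) w \<one>\<^bsub>GG\<^esub>"

lemma finite_Alph: "finite Alph"
  using finA finB by (simp add: Alph_def)

lemma ev_hA0: "ev (hA0 c) = (embA (\<pi>A [c]), 0)"
proof -
  have "6 * c \<noteq> 4" "6 * c \<noteq> 5" by presburger+
  then show ?thesis by (simp add: ev_def hA0_def)
qed
lemma ev_hA1: "ev (hA1 c) = (embA (inv\<^bsub>A\<^esub> (\<pi>A [c])), 0)"
proof -
  have "6 * c + 1 \<noteq> 4" "6 * c + 1 \<noteq> 5" "(6 * c + 1) mod 6 = 1" "(6 * c + 1) div 6 = c" by presburger+
  then show ?thesis by (simp add: ev_def hA1_def)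
qed
lemma ev_hB0: "ev (hB0 c) = (embB (\<pi>B [c]), 0)"
proof -
  have "6 * c + 2 \<noteq> 4" "6 * c + 2 \<noteq> 5" "(6 * c + 2) mod 6 = 2" "(6 * c + 2) div 6 = c" by presburger+
  then show ?thesis by (simp add: ev_def hB0_def)
qed
lemma ev_hB1: "ev (hB1 c) = (embB (inv\<^bsub>B\<^esub> (\<pi>B [c])), 0)"
proof -
  have "6 * c + 3 \<noteq> 4" "6 * c + 3 \<noteq> 5" "(6 * c + 3) mod 6 = 3" "(6 * c + 3) div 6 = c" by presburger+
  then show ?thesis by (simp add: ev_def hB1_def)
qed

lemma embA_red: "a \<in> carrier A \<Longrightarrow> red (embA a)" by (simp add: embA_def red_Cons)
lemma embB_red: "b \<in> carrier B \<Longrightarrow> red (embB b)" by (simp add: embB_def red_Cons)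

lemma ev_carrier: "c \<in> Alph \<Longrightarrow> ev c \<in> carrier GG"
  using homA homB
  by (auto simp: Alph_def ev_hA0 ev_hA1 ev_hB0 ev_hB1 embA_red embB_red carrier_F word_monoid_hom_def)
     (auto simp: ev_def)

lemma pi_Nil [simp]: "pi [] = ([], 0)" by (simp add: pi_def one_F)
lemma pi_Cons: "pi (c # w) = ev c \<otimes>\<^bsub>GG\<^esub> pi w" by (simp add: pi_def)

lemma pi_carrier: "w \<in> lists Alph \<Longrightarrow> pi w \<in> carrier GG"
proof (induction w)
  case Nil then show ?case by (simp add: one_F carrier_F)
next
  case (Cons c w)
  interpret GG: group GG by (rule GG_group)
  have "ev c \<in> carrier GG" "pi w \<in> carrier GG" using ev_carrier Cons by auto
  then show ?case by (simp only: pi_Cons GG.m_closed)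
qed

lemma pi_append: "u \<in> lists Alph \<Longrightarrow> v \<in> lists Alph \<Longrightarrow> pi (u @ v) = pi u \<otimes>\<^bsub>GG\<^esub> pi v"
proof (induction u)
  case Nil
  interpret GG: group GG by (rule GG_group)
  have "pi v \<in> carrier GG" using Nil pi_carrier by blast
  then show ?case by (simp only: append_Nil pi_def foldr_Nil id_apply GG.l_one)
next
  case (Cons c u)
  interpret GG: group GG by (rule GG_group)
  have "ev c \<in> carrier GG" "pi u \<in> carrier GG" "pi v \<in> carrier GG" using ev_carrier pi_carrier Cons.prems by auto
  moreover have "pi (u @ v) = pi u \<otimes>\<^bsub>GG\<^esub> pi v" using Cons by simp
  ultimately show ?case by (simp only: pi_Cons append_Cons GG.m_assoc)
qed

lemma pi_hom: "word_monoid_hom Alph GG pi"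
  unfolding word_monoid_hom_def using pi_carrier pi_append by (simp add: pi_def)

lemma mult_GG: "(w, n) \<otimes>\<^bsub>GG\<^esub> (v, m) = (foldr fc w v, n + m)"
  by (simp add: mult_F)

lemma embA_gcons: "embA a = gcons A B (Inl a) []"
  by (simp add: embA_def gcons_def)

lemma foldr_embA: "red w \<Longrightarrow> foldr fc (embA a) w = gcons A B (Inl a) w"
  by (simp add: embA_def gcons_def)

lemma embA_mult: "a \<in> carrier A \<Longrightarrow> b \<in> carrier A \<Longrightarrow> foldr fc (embA a) (embA b) = embA (a \<otimes>\<^bsub>A\<^esub> b)"
  using gg_l [of a b "[]"] by (simp add: embA_gcons gcons_def)

lemma piA: "u \<in> lists AlphA \<Longrightarrow> pi (map hA0 u) = (embA (\<pi>A u), 0)"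
proof (induction u)
  case Nil
  then show ?case using homA by (simp add: pi_def embA_def word_monoid_hom_def one_F)
next
  case (Cons c u)
  have c: "\<pi>A [c] \<in> carrier A" and u: "\<pi>A u \<in> carrier A"
    using Cons.prems homA by (auto simp: word_monoid_hom_def)
  have "\<pi>A (c # u) = \<pi>A [c] \<otimes>\<^bsub>A\<^esub> \<pi>A u"
  proof -
    have "[c] \<in> lists AlphA" "u \<in> lists AlphA" using Cons.prems by auto
    then have "\<pi>A ([c] @ u) = \<pi>A [c] \<otimes>\<^bsub>A\<^esub> \<pi>A u" using homA unfolding word_monoid_hom_def by blast
    then show ?thesis by simp
  qed
  then show ?case using Cons c u by (simp add: pi_def ev_hA0 embA_mult mult_F)
qed

lemma piAbar: "u \<in> lists AlphA \<Longrightarrow> pi (map hA1 (rev u)) = (embA (inv\<^bsub>A\<^esub> (\<pi>A u)), 0)"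
proof (induction u)
  case Nil
  then show ?case using homA by (simp add: pi_def embA_def word_monoid_hom_def one_F)
next
  case (Cons c u)
  have c: "\<pi>A [c] \<in> carrier A" and u: "\<pi>A u \<in> carrier A" and cA: "c \<in> AlphA"
    using Cons.prems homA by (auto simp: word_monoid_hom_def)
  have "\<pi>A (c # u) = \<pi>A [c] \<otimes>\<^bsub>A\<^esub> \<pi>A u"
  proof -
    have "[c] \<in> lists AlphA" "u \<in> lists AlphA" using Cons.prems by auto
    then have "\<pi>A ([c] @ u) = \<pi>A [c] \<otimes>\<^bsub>A\<^esub> \<pi>A u" using homA unfolding word_monoid_hom_def by blast
    then show ?thesis by simp
  qed
  moreover have "map hA1 (rev (c # u)) = map hA1 (rev u) @ [hA1 c]" by simp
  moreover have "pi [hA1 c] = (embA (inv\<^bsub>A\<^esub> (\<pi>A [c])), 0)"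
    using c by (simp add: pi_def ev_hA1 mult_F one_F embA_def)
  moreover have "map hA1 (rev u) \<in> lists Alph" "[hA1 c] \<in> lists Alph" using Cons.prems by (auto simp: Alph_def)
  ultimately show ?case using Cons c u
    by (simp add: pi_append embA_mult mult_F A.inv_mult_group)
qed

lemma embB_gcons: "embB a = gcons A B (Inr a) []"
  by (simp add: embB_def gcons_def)

lemma foldr_embB: "red w \<Longrightarrow> foldr fc (embB a) w = gcons A B (Inr a) w"
  by (simp add: embB_def gcons_def)

lemma embB_mult: "a \<in> carrier B \<Longrightarrow> b \<in> carrier B \<Longrightarrow> foldr fc (embB a) (embB b) = embB (a \<otimes>\<^bsub>B\<^esub> b)"
  using gg_r [of a b "[]"] by (simp add: embB_gcons gcons_def)

lemma piB: "u \<in> lists AlphB \<Longrightarrow> pi (map hB0 u) = (embB (\<pi>B u), 0)"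
proof (induction u)
  case Nil
  then show ?case using homB by (simp add: pi_def embB_def word_monoid_hom_def one_F)
next
  case (Cons c u)
  have c: "\<pi>B [c] \<in> carrier B" and u: "\<pi>B u \<in> carrier B"
    using Cons.prems homB by (auto simp: word_monoid_hom_def)
  have "\<pi>B (c # u) = \<pi>B [c] \<otimes>\<^bsub>B\<^esub> \<pi>B u"
  proof -
    have "[c] \<in> lists AlphB" "u \<in> lists AlphB" using Cons.prems by auto
    then have "\<pi>B ([c] @ u) = \<pi>B [c] \<otimes>\<^bsub>B\<^esub> \<pi>B u" using homB unfolding word_monoid_hom_def by blast
    then show ?thesis by simp
  qed
  then show ?case using Cons c u by (simp add: pi_def ev_hB0 embB_mult mult_F)
qed

lemma piBbar: "u \<in> lists AlphB \<Longrightarrow> pi (map hB1 (rev u)) = (embB (inv\<^bsub>B\<^esub> (\<pi>B u)), 0)"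
proof (induction u)
  case Nil
  then show ?case using homB by (simp add: pi_def embB_def word_monoid_hom_def one_F)
next
  case (Cons c u)
  have c: "\<pi>B [c] \<in> carrier B" and u: "\<pi>B u \<in> carrier B" and cA: "c \<in> AlphB"
    using Cons.prems homB by (auto simp: word_monoid_hom_def)
  have "\<pi>B (c # u) = \<pi>B [c] \<otimes>\<^bsub>B\<^esub> \<pi>B u"
  proof -
    have "[c] \<in> lists AlphB" "u \<in> lists AlphB" using Cons.prems by auto
    then have "\<pi>B ([c] @ u) = \<pi>B [c] \<otimes>\<^bsub>B\<^esub> \<pi>B u" using homB unfolding word_monoid_hom_def by blast
    then show ?thesis by simp
  qed
  moreover have "map hB1 (rev (c # u)) = map hB1 (rev u) @ [hB1 c]" by simp
  moreover have "pi [hB1 c] = (embB (inv\<^bsub>B\<^esub> (\<pi>B [c])), 0)"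
    using c by (simp add: pi_def ev_hB1 mult_F one_F embB_def)
  moreover have "map hB1 (rev u) \<in> lists Alph" "[hB1 c] \<in> lists Alph" using Cons.prems by (auto simp: Alph_def)
  ultimately show ?case using Cons c u
    by (simp add: pi_append embB_mult mult_F B.inv_mult_group)
qed

definition "PAw = map hA0 ` LA"
definition "NAw = map hA1 ` (rev ` LA)"
definition "PBw = map hB0 ` LB"
definition "NBw = map hB1 ` (rev ` LB)"
definition "T = {[4::nat]}"
definition "Tb = {[5::nat]}"
definition "SA = PAw \<union> conc NAw T"
definition "SB = PBw \<union> conc NBw T"

lemma fq_T: "fq Alph T" by (rule fq_finite_lang) (auto simp: T_def Alph_def)
lemma fq_Tb: "fq Alph Tb" by (rule fq_finite_lang) (auto simp: Tb_def Alph_def)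

lemma pi4: "pi [4] = ([], 1)" by (simp add: pi_Cons ev_def one_F mult_F)
lemma pi5: "pi [5] = ([], -1)" by (simp add: pi_Cons ev_def one_F mult_F)

lemma LA_lists: "LA \<subseteq> lists AlphA"
  using regular_fq[OF regA] by (simp add: fq_def)

lemma fq_PAw: "fq Alph PAw"
  unfolding PAw_def
  by (rule fq_map[OF regular_fq[OF regA]]) (auto simp: inj_on_def hA0_def Alph_def)

lemma fq_NAw: "fq Alph NAw"
  unfolding NAw_def
  by (rule fq_map[OF fq_rev[OF regular_fq[OF regA]]]) (auto simp: inj_on_def hA1_def Alph_def)

lemma fq_SA: "fq Alph SA"
  unfolding SA_def by (intro fq_union fq_conc fq_PAw fq_NAw fq_T)

lemma SA_lists: "SA \<subseteq> lists Alph"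
  using fq_SA by (simp add: fq_def)

lemma SA_sound:
  assumes "s \<in> SA"
  shows "\<exists>a. a \<in> carrier A \<and> a \<noteq> \<one>\<^bsub>A\<^esub> \<and> pi s = ([Inl a], N (Inl a))"
  using assms unfolding SA_def
proof
  assume "s \<in> PAw"
  then obtain u where u: "u \<in> LA" "s = map hA0 u" by (auto simp: PAw_def)
  have ul: "u \<in> lists AlphA" using u LA_lists by auto
  have pos: "\<pi>A u \<in> carrier A" "ltA \<one>\<^bsub>A\<^esub> (\<pi>A u)" using u coneA by (auto simp: positive_cone_def)
  then have "\<pi>A u \<noteq> \<one>\<^bsub>A\<^esub>" using lo_irrefl[OF oA] by auto
  then show ?thesis using piA[OF ul] u pos by (intro exI[of _ "\<pi>A u"]) (simp add: embA_def)
next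
  assume "s \<in> conc NAw T"
  then obtain u where u: "u \<in> LA" "s = map hA1 (rev u) @ [4]" by (auto simp: NAw_def conc_def T_def)
  have ul: "u \<in> lists AlphA" using u LA_lists by auto
  have pos: "\<pi>A u \<in> carrier A" "ltA \<one>\<^bsub>A\<^esub> (\<pi>A u)" using u coneA by (auto simp: positive_cone_def)
  then have n1: "\<pi>A u \<noteq> \<one>\<^bsub>A\<^esub>" using lo_irrefl[OF oA] by auto
  let ?a = "inv\<^bsub>A\<^esub> (\<pi>A u)"
  have a: "?a \<in> carrier A" "?a \<noteq> \<one>\<^bsub>A\<^esub>" using pos n1 by auto
  have "\<not> ltA \<one>\<^bsub>A\<^esub> ?a" using lo_pos_inv[OF A.is_group oA pos(1) n1] pos by simp
  moreover have "pi s = ([Inl ?a], 1)"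
  proof -
    have "map hA1 (rev u) \<in> lists Alph" "[4] \<in> lists Alph" using ul by (auto simp: Alph_def)
    then have "pi s = pi (map hA1 (rev u)) \<otimes>\<^bsub>GG\<^esub> pi [4]" using u pi_append by simp
    then show ?thesis using piAbar[OF ul] a by (simp add: embA_def pi_Cons ev_def one_F mult_F)
  qed
  ultimately show ?thesis using a by (intro exI[of _ ?a]) simp
qed

lemma SA_complete:
  assumes a: "a \<in> carrier A" "a \<noteq> \<one>\<^bsub>A\<^esub>"
  shows "\<exists>s \<in> SA. pi s = ([Inl a], N (Inl a))"
proof (cases "ltA \<one>\<^bsub>A\<^esub> a")
  case True
  then have "a \<in> \<pi>A ` LA" using a coneA by (simp add: positive_cone_def)
  then obtain u where u: "u \<in> LA" "\<pi>A u = a" by auto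
  have ul: "u \<in> lists AlphA" using u LA_lists by auto
  have "map hA0 u \<in> SA" using u by (simp add: SA_def PAw_def)
  moreover have "pi (map hA0 u) = ([Inl a], N (Inl a))" using piA[OF ul] u a True by (simp add: embA_def)
  ultimately show ?thesis by blast
next
  case False
  then have ip: "ltA \<one>\<^bsub>A\<^esub> (inv\<^bsub>A\<^esub> a)" using lo_pos_inv[OF A.is_group oA a] by simp
  then have "inv\<^bsub>A\<^esub> a \<in> \<pi>A ` LA" using a coneA by (simp add: positive_cone_def)
  then obtain u where u: "u \<in> LA" "\<pi>A u = inv\<^bsub>A\<^esub> a" by auto
  have ul: "u \<in> lists AlphA" using u LA_lists by auto
  let ?s = "map hA1 (rev u) @ [4]"
  have "?s \<in> SA" using u by (auto simp: SA_def NAw_def conc_def T_def)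
  moreover have "pi ?s = ([Inl a], N (Inl a))"
  proof -
    have "map hA1 (rev u) \<in> lists Alph" "[4] \<in> lists Alph" using ul by (auto simp: Alph_def)
    then have "pi ?s = pi (map hA1 (rev u)) \<otimes>\<^bsub>GG\<^esub> pi [4]" using pi_append by simp
    then show ?thesis using piAbar[OF ul] u a False by (simp add: embA_def pi_Cons ev_def one_F mult_F)
  qed
  ultimately show ?thesis by blast
qed

lemma LB_lists: "LB \<subseteq> lists AlphB"
  using regular_fq[OF regB] by (simp add: fq_def)

lemma fq_PBw: "fq Alph PBw"
  unfolding PBw_def
  by (rule fq_map[OF regular_fq[OF regB]]) (auto simp: inj_on_def hB0_def Alph_def)

lemma fq_NBw: "fq Alph NBw"
  unfolding NBw_def
  by (rule fq_map[OF fq_rev[OF regular_fq[OF regB]]]) (auto simp: inj_on_def hB1_def Alph_def)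

lemma fq_SB: "fq Alph SB"
  unfolding SB_def by (intro fq_union fq_conc fq_PBw fq_NBw fq_T)

lemma SB_lists: "SB \<subseteq> lists Alph"
  using fq_SB by (simp add: fq_def)

lemma SB_sound:
  assumes "s \<in> SB"
  shows "\<exists>a. a \<in> carrier B \<and> a \<noteq> \<one>\<^bsub>B\<^esub> \<and> pi s = ([Inr a], N (Inr a))"
  using assms unfolding SB_def
proof
  assume "s \<in> PBw"
  then obtain u where u: "u \<in> LB" "s = map hB0 u" by (auto simp: PBw_def)
  have ul: "u \<in> lists AlphB" using u LB_lists by auto
  have pos: "\<pi>B u \<in> carrier B" "ltB \<one>\<^bsub>B\<^esub> (\<pi>B u)" using u coneB by (auto simp: positive_cone_def)
  then have "\<pi>B u \<noteq> \<one>\<^bsub>B\<^esub>" using lo_irrefl[OF oB] by auto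
  then show ?thesis using piB[OF ul] u pos by (intro exI[of _ "\<pi>B u"]) (simp add: embB_def)
next
  assume "s \<in> conc NBw T"
  then obtain u where u: "u \<in> LB" "s = map hB1 (rev u) @ [4]" by (auto simp: NBw_def conc_def T_def)
  have ul: "u \<in> lists AlphB" using u LB_lists by auto
  have pos: "\<pi>B u \<in> carrier B" "ltB \<one>\<^bsub>B\<^esub> (\<pi>B u)" using u coneB by (auto simp: positive_cone_def)
  then have n1: "\<pi>B u \<noteq> \<one>\<^bsub>B\<^esub>" using lo_irrefl[OF oB] by auto
  let ?a = "inv\<^bsub>B\<^esub> (\<pi>B u)"
  have a: "?a \<in> carrier B" "?a \<noteq> \<one>\<^bsub>B\<^esub>" using pos n1 by auto
  have "\<not> ltB \<one>\<^bsub>B\<^esub> ?a" using lo_pos_inv[OF B.is_group oB pos(1) n1] pos by simp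
  moreover have "pi s = ([Inr ?a], 1)"
  proof -
    have "map hB1 (rev u) \<in> lists Alph" "[4] \<in> lists Alph" using ul by (auto simp: Alph_def)
    then have "pi s = pi (map hB1 (rev u)) \<otimes>\<^bsub>GG\<^esub> pi [4]" using u pi_append by simp
    then show ?thesis using piBbar[OF ul] a by (simp add: embB_def pi_Cons ev_def one_F mult_F)
  qed
  ultimately show ?thesis using a by (intro exI[of _ ?a]) simp
qed

lemma SB_complete:
  assumes a: "a \<in> carrier B" "a \<noteq> \<one>\<^bsub>B\<^esub>"
  shows "\<exists>s \<in> SB. pi s = ([Inr a], N (Inr a))"
proof (cases "ltB \<one>\<^bsub>B\<^esub> a")
  case True
  then have "a \<in> \<pi>B ` LB" using a coneB by (simp add: positive_cone_def)
  then obtain u where u: "u \<in> LB" "\<pi>B u = a" by auto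
  have ul: "u \<in> lists AlphB" using u LB_lists by auto
  have "map hB0 u \<in> SB" using u by (simp add: SB_def PBw_def)
  moreover have "pi (map hB0 u) = ([Inr a], N (Inr a))" using piB[OF ul] u a True by (simp add: embB_def)
  ultimately show ?thesis by blast
next
  case False
  then have ip: "ltB \<one>\<^bsub>B\<^esub> (inv\<^bsub>B\<^esub> a)" using lo_pos_inv[OF B.is_group oB a] by simp
  then have "inv\<^bsub>B\<^esub> a \<in> \<pi>B ` LB" using a coneB by (simp add: positive_cone_def)
  then obtain u where u: "u \<in> LB" "\<pi>B u = inv\<^bsub>B\<^esub> a" by auto
  have ul: "u \<in> lists AlphB" using u LB_lists by auto
  let ?s = "map hB1 (rev u) @ [4]"
  have "?s \<in> SB" using u by (auto simp: SB_def NBw_def conc_def T_def)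
  moreover have "pi ?s = ([Inr a], N (Inr a))"
  proof -
    have "map hB1 (rev u) \<in> lists Alph" "[4] \<in> lists Alph" using ul by (auto simp: Alph_def)
    then have "pi ?s = pi (map hB1 (rev u)) \<otimes>\<^bsub>GG\<^esub> pi [4]" using pi_append by simp
    then show ?thesis using piBbar[OF ul] u a False by (simp add: embB_def pi_Cons ev_def one_F mult_F)
  qed
  ultimately show ?thesis by blast
qed

lemma concE: "x \<in> conc L1 L2 \<Longrightarrow> (\<And>u v. x = u @ v \<Longrightarrow> u \<in> L1 \<Longrightarrow> v \<in> L2 \<Longrightarrow> P) \<Longrightarrow> P"
  by (auto simp: conc_def)

definition "XX = conc SA (conc Tb SB)"
definition "YY = conc (kstar XX) (insert [] SA)"
definition "WW = conc SB YY \<union> conc SA (insert [] (conc Tb (conc SB YY)))"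
definition "LL = conc WW (kstar T) \<union> conc T (kstar T)"

lemma fq_LL: "fq Alph LL"
proof -
  have e: "fq Alph {[]}" by (rule fq_finite_lang) auto
  have "fq Alph XX" unfolding XX_def by (intro fq_conc fq_SA fq_SB fq_Tb)
  then have "fq Alph YY" unfolding YY_def using fq_union[OF e fq_SA] by (intro fq_conc fq_kstar) auto
  then have "fq Alph WW" unfolding WW_def
    using fq_union[OF e fq_conc[OF fq_Tb fq_conc[OF fq_SB \<open>fq Alph YY\<close>]]]
    by (intro fq_union fq_conc fq_SA fq_SB) auto
  then show ?thesis unfolding LL_def by (intro fq_union fq_conc fq_kstar fq_T)
qed

lemma lists_of_fq: "fq Alph L \<Longrightarrow> x \<in> L \<Longrightarrow> x \<in> lists Alph"
  by (auto simp: fq_def)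

lemma fq_XX: "fq Alph XX" unfolding XX_def by (intro fq_conc fq_SA fq_SB fq_Tb)

lemma unit_pi:
  assumes "sa \<in> SA" "sb \<in> SB"
  shows "\<exists>a b. a \<in> carrier A \<and> a \<noteq> \<one>\<^bsub>A\<^esub> \<and> b \<in> carrier B \<and> b \<noteq> \<one>\<^bsub>B\<^esub> \<and>
     pi (sa @ [5] @ sb) = ([Inl a, Inr b], N (Inl a) + N (Inr b) - 1)"
proof -
  obtain a where a: "a \<in> carrier A" "a \<noteq> \<one>\<^bsub>A\<^esub>" "pi sa = ([Inl a], N (Inl a))" using SA_sound assms(1) by blast
  obtain b where b: "b \<in> carrier B" "b \<noteq> \<one>\<^bsub>B\<^esub>" "pi sb = ([Inr b], N (Inr b))" using SB_sound assms(2) by blast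
  have l: "sa \<in> lists Alph" "sb \<in> lists Alph" "[5] \<in> lists Alph"
    using assms SA_lists SB_lists by (auto simp: Alph_def)
  have "pi ([5] @ sb) = pi [5] \<otimes>\<^bsub>GG\<^esub> pi sb" by (rule pi_append) (use l in auto)
  moreover have "pi (sa @ ([5] @ sb)) = pi sa \<otimes>\<^bsub>GG\<^esub> pi ([5] @ sb)" by (rule pi_append) (use l in auto)
  ultimately have "pi (sa @ [5] @ sb) = pi sa \<otimes>\<^bsub>GG\<^esub> (pi [5] \<otimes>\<^bsub>GG\<^esub> pi sb)" by simp
  then show ?thesis using a b by (intro exI[of _ a] exI[of _ b]) (simp add: pi5 mult_F)
qed

lemma kstarX_sound:
  assumes "x \<in> kstar XX"
  shows "\<exists>w. red w \<and> (w = [] \<or> (isl (hd w) \<and> \<not> isl (last w))) \<and> pi x = (w, sig w)"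
  using assms
proof (induction rule: kstar.induct)
  case kstar_nil
  then show ?case by (intro exI[of _ "[]"]) simp
next
  case (kstar_app u v)
  obtain w where w: "red w" "w = [] \<or> (isl (hd w) \<and> \<not> isl (last w))" "pi v = (w, sig w)"
    using kstar_app.IH by blast
  obtain sa sb where u: "u = sa @ [5] @ sb" "sa \<in> SA" "sb \<in> SB"
    using kstar_app.hyps(1) by (auto simp: XX_def conc_def Tb_def)
  obtain a b where ab: "a \<in> carrier A" "a \<noteq> \<one>\<^bsub>A\<^esub>" "b \<in> carrier B" "b \<noteq> \<one>\<^bsub>B\<^esub>"
    "pi u = ([Inl a, Inr b], N (Inl a) + N (Inr b) - 1)" using unit_pi[OF u(2,3)] u(1) by blast
  have ul: "u \<in> lists Alph" using kstar_app.hyps(1) fq_XX by (rule lists_of_fq[rotated])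
  have vl: "v \<in> lists Alph" using kstar_app.hyps(2) kstar_lists[of XX Alph] fq_XX by (auto simp: fq_def)
  let ?w = "Inl a # Inr b # w"
  have nm: "w = [] \<or> \<not> same_factor (Inr b) (hd w)" using w(2) by (cases w) (auto simp: same_factor_iff)
  have "pi (u @ v) = pi u \<otimes>\<^bsub>GG\<^esub> pi v" using ul vl by (simp add: pi_append)
  also have "\<dots> = (?w, sig ?w)" using ab w nm by (simp add: mult_F fc_nomerge)
  finally have "pi (u @ v) = (?w, sig ?w)" .
  moreover have "red ?w" using ab w nm by (simp add: red_Cons)
  moreover have "isl (hd ?w) \<and> \<not> isl (last ?w)" using w(2) by auto
  ultimately show ?case by blast
qed

lemma kstar_lists': "x \<in> kstar L \<Longrightarrow> fq Alph L \<Longrightarrow> x \<in> lists Alph"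
  using kstar_lists[of L Alph] by (auto simp: fq_def)

lemma YY_sound:
  assumes "y \<in> YY"
  shows "y \<in> lists Alph \<and> (\<exists>w. red w \<and> (w = [] \<or> isl (hd w)) \<and> pi y = (w, sig w))"
proof -
  obtain x z where y: "y = x @ z" "x \<in> kstar XX" "z \<in> insert [] SA" using assms by (auto simp: YY_def conc_def)
  obtain w where w: "red w" "w = [] \<or> (isl (hd w) \<and> \<not> isl (last w))" "pi x = (w, sig w)"
    using kstarX_sound[OF y(2)] by blast
  have xl: "x \<in> lists Alph" using kstar_lists'[OF y(2) fq_XX] .
  have zl: "z \<in> lists Alph" using y(3) SA_lists by auto
  show ?thesis
  proof (cases "z = []")
    case True
    then show ?thesis using y w xl by auto
  next
    case False
    then obtain a where a: "a \<in> carrier A" "a \<noteq> \<one>\<^bsub>A\<^esub>" "pi z = ([Inl a], N (Inl a))"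
      using SA_sound y(3) by blast
    have r: "red (w @ [Inl a])" using w a by (auto simp: red_snoc same_factor_iff)
    have "pi y = pi x \<otimes>\<^bsub>GG\<^esub> pi z" using y xl zl by (simp add: pi_append)
    also have "\<dots> = (w @ [Inl a], sig w + N (Inl a))" using w a foldr_red_append[OF r] by (simp add: mult_F)
    also have "sig w + N (Inl a) = sig (w @ [Inl a])" using w(2) by (auto simp: sig_append J_def)
    finally have "pi y = (w @ [Inl a], sig (w @ [Inl a]))" .
    moreover have "isl (hd (w @ [Inl a]))" using w(2) by (cases w) auto
    ultimately show ?thesis using r xl zl y by auto
  qed
qed

lemma YY_lists: "YY \<subseteq> lists Alph" using YY_sound by blast

lemma WW_sound:
  assumes "x \<in> WW"
  shows "x \<in> lists Alph \<and> (\<exists>w. red w \<and> w \<noteq> [] \<and> pi x = (w, sig w))"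
proof -
  have bY: "sb @ y \<in> lists Alph \<and> (\<exists>w. red w \<and> w \<noteq> [] \<and> \<not> isl (hd w) \<and> pi (sb @ y) = (w, sig w))"
    if sbh: "sb \<in> SB" and yh: "y \<in> YY" for sb y
  proof -
    obtain w where w: "red w" "w = [] \<or> isl (hd w)" "pi y = (w, sig w)" and yl: "y \<in> lists Alph"
      using YY_sound[OF yh] by blast
    obtain b where b: "b \<in> carrier B" "b \<noteq> \<one>\<^bsub>B\<^esub>" "pi sb = ([Inr b], N (Inr b))" using SB_sound sbh by blast
    have sl: "sb \<in> lists Alph" using sbh SB_lists by auto
    have nm: "w = [] \<or> \<not> same_factor (Inr b) (hd w)" using w(2) by (cases w) (auto simp: same_factor_iff)
    have "pi (sb @ y) = pi sb \<otimes>\<^bsub>GG\<^esub> pi y" using sl yl by (simp add: pi_append)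
    also have "\<dots> = (Inr b # w, sig (Inr b # w))" using b w nm by (simp add: mult_F fc_nomerge)
    finally show ?thesis using b w nm sl yl by (intro conjI exI[of _ "Inr b # w"]) (auto simp: red_Cons)
  qed
  show ?thesis using assms unfolding WW_def
  proof
    assume "x \<in> conc SB YY"
    then obtain u v where uv: "x = u @ v" "u \<in> SB" "v \<in> YY" by (auto simp: conc_def)
    then show ?thesis using bY[OF uv(2,3)] by blast
  next
    assume "x \<in> conc SA (insert [] (conc Tb (conc SB YY)))"
    then obtain sa r where x: "x = sa @ r" "sa \<in> SA" "r \<in> insert [] (conc Tb (conc SB YY))"
      by (rule concE)
    obtain a where a: "a \<in> carrier A" "a \<noteq> \<one>\<^bsub>A\<^esub>" "pi sa = ([Inl a], N (Inl a))" using SA_sound x(2) by blast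
    have sl: "sa \<in> lists Alph" using x(2) SA_lists by auto
    show ?thesis
    proof (cases "r = []")
      case True
      then show ?thesis using x a sl by (intro conjI exI[of _ "[Inl a]"]) (auto simp: red_Cons)
    next
      case False
      then obtain sb y where r: "r = [5] @ (sb @ y)" "sb \<in> SB" "y \<in> YY" using x(3) by (auto simp: conc_def Tb_def)
      obtain w where w: "red w" "w \<noteq> []" "\<not> isl (hd w)" "pi (sb @ y) = (w, sig w)" and l: "sb @ y \<in> lists Alph"
        using bY[OF r(2,3)] by blast
      have rl: "r \<in> lists Alph" using r l by (auto simp: Alph_def)
      have nm: "\<not> same_factor (Inl a) (hd w)" using w(3) by (auto simp: same_factor_iff)
      have "pi ([5] @ (sb @ y)) = pi [5] \<otimes>\<^bsub>GG\<^esub> pi (sb @ y)" by (rule pi_append) (use l in \<open>auto simp: Alph_def\<close>)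
      then have "pi r = ([], -1) \<otimes>\<^bsub>GG\<^esub> (w, sig w)" using r(1) w(4) pi5 by (simp only:)
      then have "pi r = (w, sig w - 1)" by (simp add: mult_F)
      then have "pi x = (Inl a # w, sig (Inl a # w))"
        using x a sl rl w nm by (simp add: pi_append mult_F fc_nomerge)
      moreover have "red (Inl a # w)" using a w nm by (simp add: red_Cons)
      ultimately show ?thesis using sl rl x by auto
    qed
  qed
qed

lemma kstarT: "x \<in> kstar T \<Longrightarrow> x \<in> lists Alph \<and> (\<exists>k\<ge>0. pi x = ([], k))"
proof (induction rule: kstar.induct)
  case kstar_nil then show ?case by auto
next
  case (kstar_app u v)
  then have u: "u = [4]" by (simp add: T_def)
  obtain k where "k \<ge> 0" "pi v = ([], k)" using kstar_app.IH by blast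
  then show ?case using kstar_app u by (auto simp: pi_Cons ev_def mult_F Alph_def)
qed

lemma LL_sound: "x \<in> LL \<Longrightarrow> pi x \<in> PC"
proof -
  assume "x \<in> LL"
  then show "pi x \<in> PC" unfolding LL_def
  proof
    assume "x \<in> conc WW (kstar T)"
    then obtain u v where x: "x = u @ v" "u \<in> WW" "v \<in> kstar T" by (auto simp: conc_def)
    obtain w where w: "red w" "w \<noteq> []" "pi u = (w, sig w)" and ul: "u \<in> lists Alph" using WW_sound[OF x(2)] by blast
    obtain k where k: "k \<ge> 0" "pi v = ([], k)" and vl: "v \<in> lists Alph" using kstarT[OF x(3)] by blast
    have "pi x = (w, sig w + k)" using x ul vl w k foldr_red_append[of A B w "[]"] by (simp add: pi_append mult_F)
    then show ?thesis using w k by (simp add: PC_def sval_def)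
  next
    assume "x \<in> conc T (kstar T)"
    then obtain v where x: "x = [4] @ v" "v \<in> kstar T" by (auto simp: conc_def T_def)
    obtain k where k: "k \<ge> 0" "pi v = ([], k)" using kstarT[OF x(2)] by blast
    have "pi x = ([], 1 + k)" using x k by (simp add: pi_Cons ev_def mult_F)
    then show ?thesis using k by (simp add: PC_def sval_def)
  qed
qed

lemma unit_pi2:
  assumes "sa \<in> SA" "sb \<in> SB" "pi sa = ([Inl a], na)" "pi sb = ([Inr b], nb)"
  shows "pi (sa @ [5] @ sb) = ([Inl a, Inr b], na + nb - 1)"
proof -
  have l: "sa \<in> lists Alph" "sb \<in> lists Alph" "[5] \<in> lists Alph"
    using assms SA_lists SB_lists by (auto simp: Alph_def)
  have "pi ([5] @ sb) = pi [5] \<otimes>\<^bsub>GG\<^esub> pi sb" by (rule pi_append) (use l in auto)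
  moreover have "pi (sa @ ([5] @ sb)) = pi sa \<otimes>\<^bsub>GG\<^esub> pi ([5] @ sb)" by (rule pi_append) (use l in auto)
  ultimately have "pi (sa @ [5] @ sb) = pi sa \<otimes>\<^bsub>GG\<^esub> (pi [5] \<otimes>\<^bsub>GG\<^esub> pi sb)" by simp
  then show ?thesis using assms by (simp add: pi5 mult_F)
qed

lemma YY_complete:
  assumes "red w" "w = [] \<or> isl (hd w)"
  shows "\<exists>y \<in> YY. pi y = (w, sig w)"
  using assms
proof (induction "length w" arbitrary: w rule: less_induct)
  case less
  show ?case
  proof (cases w)
    case Nil
    have "[] \<in> YY" by (auto simp: YY_def conc_def intro!: exI[of _ "[]"] kstar.kstar_nil)
    then show ?thesis using Nil by (intro bexI[of _ "[]"]) simp_all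
  next
    case (Cons x rest)
    then obtain a where x: "x = Inl a" using less.prems(2) by (cases x) auto
    have a: "a \<in> carrier A" "a \<noteq> \<one>\<^bsub>A\<^esub>" using less.prems(1) Cons x by (auto simp: red_Cons)
    obtain sa where sa: "sa \<in> SA" "pi sa = ([Inl a], N (Inl a))" using SA_complete[OF a] by blast
    show ?thesis
    proof (cases rest)
      case Nil
      have "sa \<in> YY" using sa(1) kstar.kstar_nil[of XX] by (force simp: YY_def conc_def)
      then show ?thesis using sa Cons Nil x by auto
    next
      case (Cons y w')
      have r: "red rest" "\<not> same_factor x y" using less.prems(1) \<open>w = x # rest\<close> Cons by (auto simp: red_Cons)
      then obtain b where y: "y = Inr b" using x by (cases y) auto
      have b: "b \<in> carrier B" "b \<noteq> \<one>\<^bsub>B\<^esub>" using r Cons y by (auto simp: red_Cons)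
      have w': "red w'" "w' = [] \<or> isl (hd w')" using r(1) Cons y by (auto simp: red_Cons same_factor_iff)
      obtain sb where sb: "sb \<in> SB" "pi sb = ([Inr b], N (Inr b))" using SB_complete[OF b] by blast
      have "length w' < length w" using \<open>w = x # rest\<close> Cons by simp
      then obtain y' where y': "y' \<in> YY" "pi y' = (w', sig w')" using less.hyps w' by blast
      obtain x' z' where xz: "y' = x' @ z'" "x' \<in> kstar XX" "z' \<in> insert [] SA"
        using y'(1) unfolding YY_def by (rule concE)
      let ?u = "sa @ [5] @ sb"
      have uX: "?u \<in> XX" using sa sb by (auto simp: XX_def conc_def Tb_def)
      have ul: "?u \<in> lists Alph" using lists_of_fq[OF fq_XX uX] .
      have yl: "y' \<in> lists Alph" using y' YY_lists by auto
      have "(?u @ x') @ z' \<in> YY" using kstar.kstar_app[OF uX xz(2)] xz(3) unfolding YY_def conc_def by blast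
      moreover have "pi ((?u @ x') @ z') = (w, sig w)"
      proof -
        have "pi ((?u @ x') @ z') = pi (?u @ y')" using xz by simp
        also have "\<dots> = pi ?u \<otimes>\<^bsub>GG\<^esub> pi y'" using ul yl by (rule pi_append)
        also have "\<dots> = ([Inl a, Inr b], N (Inl a) + N (Inr b) - 1) \<otimes>\<^bsub>GG\<^esub> (w', sig w')"
          using unit_pi2[OF sa(1) sb(1) sa(2) sb(2)] y' by simp
        also have "\<dots> = (Inl a # Inr b # w', sig (Inl a # Inr b # w'))"
          using w'(2) by (cases w') (auto simp: mult_F fc_nomerge same_factor_iff)
        finally show ?thesis using \<open>w = x # rest\<close> Cons x y by simp
      qed
      ultimately show ?thesis by blast
    qed
  qed
qed

lemma WW_complete:
  assumes "red w" "w \<noteq> []"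
  shows "\<exists>x \<in> WW. pi x = (w, sig w)"
proof -
  obtain z rest where w: "w = z # rest" using assms by (cases w) auto
  show ?thesis
  proof (cases z)
    case (Inr b)
    have b: "b \<in> carrier B" "b \<noteq> \<one>\<^bsub>B\<^esub>" using assms w Inr by (auto simp: red_Cons)
    have r: "red rest" "rest = [] \<or> isl (hd rest)" using assms w Inr by (auto simp: red_Cons same_factor_iff)
    obtain sb where sb: "sb \<in> SB" "pi sb = ([Inr b], N (Inr b))" using SB_complete[OF b] by blast
    obtain y where y: "y \<in> YY" "pi y = (rest, sig rest)" using YY_complete[OF r] by blast
    have "sb @ y \<in> WW" using sb y by (auto simp: WW_def conc_def)
    moreover have "pi (sb @ y) = (w, sig w)"
    proof -
      have "pi (sb @ y) = pi sb \<otimes>\<^bsub>GG\<^esub> pi y" using sb y SB_lists YY_lists by (intro pi_append) auto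
      then show ?thesis using sb y w Inr r(2) by (cases rest) (auto simp: mult_F fc_nomerge same_factor_iff)
    qed
    ultimately show ?thesis by blast
  next
    case (Inl a)
    have a: "a \<in> carrier A" "a \<noteq> \<one>\<^bsub>A\<^esub>" using assms w Inl by (auto simp: red_Cons)
    obtain sa where sa: "sa \<in> SA" "pi sa = ([Inl a], N (Inl a))" using SA_complete[OF a] by blast
    have sal: "sa \<in> lists Alph" using sa SA_lists by auto
    show ?thesis
    proof (cases rest)
      case Nil
      have "sa @ [] \<in> WW" using sa by (auto simp: WW_def conc_def)
      then show ?thesis using sa w Inl Nil by auto
    next
      case (Cons y w')
      have r: "red rest" "\<not> same_factor z y" using assms w Cons by (auto simp: red_Cons)
      then obtain b where y: "y = Inr b" using Inl by (cases y) auto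
      have b: "b \<in> carrier B" "b \<noteq> \<one>\<^bsub>B\<^esub>" using r Cons y by (auto simp: red_Cons)
      have w': "red w'" "w' = [] \<or> isl (hd w')" using r(1) Cons y by (auto simp: red_Cons same_factor_iff)
      obtain sb where sb: "sb \<in> SB" "pi sb = ([Inr b], N (Inr b))" using SB_complete[OF b] by blast
      obtain y' where y': "y' \<in> YY" "pi y' = (w', sig w')" using YY_complete[OF w'] by blast
      have sbl: "sb \<in> lists Alph" using sb SB_lists by auto
      have yl: "y' \<in> lists Alph" using y' YY_lists by auto
      let ?x = "sa @ ([5] @ (sb @ y'))"
      have "?x \<in> WW" using sa sb y' by (auto simp: WW_def conc_def Tb_def)
      moreover have "pi ?x = (w, sig w)"
      proof -
        have "pi (sb @ y') = pi sb \<otimes>\<^bsub>GG\<^esub> pi y'" using sbl yl by (rule pi_append)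
        then have e1: "pi (sb @ y') = (Inr b # w', sig (Inr b # w'))"
          using sb y' w'(2) by (cases w') (auto simp: mult_F fc_nomerge same_factor_iff)
        have "pi ([5] @ (sb @ y')) = pi [5] \<otimes>\<^bsub>GG\<^esub> pi (sb @ y')"
          by (rule pi_append) (use sbl yl in \<open>auto simp: Alph_def\<close>)
        then have e2: "pi ([5] @ (sb @ y')) = (Inr b # w', sig (Inr b # w') - 1)"
          using e1 pi5 by (simp add: mult_F)
        have "pi ?x = pi sa \<otimes>\<^bsub>GG\<^esub> pi ([5] @ (sb @ y'))"
          by (rule pi_append) (use sal sbl yl in \<open>auto simp: Alph_def\<close>)
        then show ?thesis using e2 sa w Inl Cons y by (simp add: mult_F)
      qed
      ultimately show ?thesis by blast
    qed
  qed
qed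

lemma pi_rep4: "pi (replicate k 4) = ([], int k)"
  by (induction k) (auto simp: pi_Cons ev_def mult_F)

lemma pi_rep5: "pi (replicate k 5) = ([], - int k)"
  by (induction k) (auto simp: pi_Cons ev_def mult_F)

lemma rep4_kstar: "replicate k 4 \<in> kstar T"
  by (induction k) (auto simp: T_def intro: kstar.kstar_nil kstar.kstar_app[of "[4]", simplified])

lemma rep_lists: "replicate k 4 \<in> lists Alph" "replicate k 5 \<in> lists Alph"
  by (auto simp: Alph_def)

lemma WW_lists: "WW \<subseteq> lists Alph" using WW_sound by blast

lemma LL_complete:
  assumes "g \<in> PC" shows "g \<in> pi ` LL"
proof -
  obtain w n where g: "g = (w, n)" "red w" "sval w \<le> n" using assms by (auto simp: PC_def)
  show ?thesis
  proof (cases "w = []")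
    case True
    then have n: "n \<ge> 1" using g by (simp add: sval_def)
    let ?x = "[4] @ replicate (nat (n - 1)) 4"
    have "?x \<in> LL" using rep4_kstar by (auto simp: LL_def conc_def T_def)
    moreover have "pi ?x = g" using n g True by (simp add: pi_Cons ev_def mult_F pi_rep4)
    ultimately show ?thesis by (metis rev_image_eqI)
  next
    case False
    obtain x where x: "x \<in> WW" "pi x = (w, sig w)" using WW_complete[OF g(2) False] by blast
    let ?k = "nat (n - sig w)"
    have "x @ replicate ?k 4 \<in> LL" using x rep4_kstar by (auto simp: LL_def conc_def)
    moreover have "pi (x @ replicate ?k 4) = g"
    proof -
      have "pi (x @ replicate ?k 4) = pi x \<otimes>\<^bsub>GG\<^esub> pi (replicate ?k 4)"
        using x WW_lists rep_lists by (intro pi_append) auto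
      then show ?thesis using x g False foldr_red_append[of A B w "[]"] by (simp add: pi_rep4 mult_F sval_def)
    qed
    ultimately show ?thesis by (metis rev_image_eqI)
  qed
qed

lemma pi_LL: "pi ` LL = PC"
  using LL_sound LL_complete by blast

lemma pi_onto: "pi ` lists Alph = carrier GG"
proof
  show "pi ` lists Alph \<subseteq> carrier GG" using pi_carrier by blast
next
  show "carrier GG \<subseteq> pi ` lists Alph"
  proof
    fix g assume "g \<in> carrier GG"
    then obtain w n where g: "g = (w, n)" "red w" by (auto simp: carrier_F)
    obtain x where x: "x \<in> lists Alph" "pi x = (w, sig w)"
    proof (cases "w = []")
      case True then show ?thesis using that[of "[]"] by simp
    next
      case False
      then show ?thesis using WW_complete[OF g(2)] WW_lists that by blast
    qed
    show "g \<in> pi ` lists Alph"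
    proof (cases "n \<ge> sig w")
      case True
      let ?k = "nat (n - sig w)"
      have "pi (x @ replicate ?k 4) = pi x \<otimes>\<^bsub>GG\<^esub> pi (replicate ?k 4)"
        using x rep_lists by (intro pi_append) auto
      then have "pi (x @ replicate ?k 4) = g"
        using x g True foldr_red_append[of A B w "[]"] by (simp add: pi_rep4 mult_F)
      moreover have "x @ replicate ?k 4 \<in> lists Alph" using x rep_lists by simp
      ultimately show ?thesis by (metis rev_image_eqI)
    next
      case False
      let ?k = "nat (sig w - n)"
      have "pi (x @ replicate ?k 5) = pi x \<otimes>\<^bsub>GG\<^esub> pi (replicate ?k 5)"
        using x rep_lists by (intro pi_append) auto
      then have "pi (x @ replicate ?k 5) = g"
        using x g False foldr_red_append[of A B w "[]"] by (simp add: pi_rep5 mult_F)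
      moreover have "x @ replicate ?k 5 \<in> lists Alph" using x rep_lists by simp
      ultimately show ?thesis by (metis rev_image_eqI)
    qed
  qed
qed

lemma pi_gen: "x \<in> lists Alph \<Longrightarrow> pi x \<in> generate GG (ev ` Alph)"
proof (induction x)
  case Nil
  have "pi [] = \<one>\<^bsub>GG\<^esub>" by (simp only: pi_def foldr_Nil id_apply)
  then show ?case using generate.one[of GG "ev ` Alph"] by (simp only:)
next
  case (Cons c x)
  then have c: "c \<in> Alph" and x: "x \<in> lists Alph" by simp_all
  from c have "ev c \<in> ev ` Alph" by (rule imageI)
  then have "ev c \<in> generate GG (ev ` Alph)" by (rule generate.incl)
  moreover have "pi x \<in> generate GG (ev ` Alph)" using Cons.IH x by simp
  ultimately show ?case unfolding pi_Cons by (rule generate.eng)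
qed

lemma GG_fg: "finitely_generated_group GG"
proof -
  interpret GG: group GG by (rule GG_group)
  have S: "ev ` Alph \<subseteq> carrier GG" using ev_carrier by blast
  have gen: "pi x \<in> generate GG (ev ` Alph)" if "x \<in> lists Alph" for x
    using that pi_gen by blast
  have "carrier GG \<subseteq> generate GG (ev ` Alph)"
  proof
    fix g assume "g \<in> carrier GG"
    then obtain x where "x \<in> lists Alph" "g = pi x" using pi_onto by (metis imageE)
    then show "g \<in> generate GG (ev ` Alph)" using gen by simp
  qed
  moreover have "generate GG (ev ` Alph) \<subseteq> carrier GG" using GG.generate_incl[OF S] .
  ultimately have "generate GG (ev ` Alph) = carrier GG" by blast
  then show ?thesis unfolding finitely_generated_group_def using S finite_Alph by blast
qed

lemma main: "admits_regular_left_order GG"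
  unfolding admits_regular_left_order_def regular_left_order_def
proof (intro exI conjI)
  show "left_order GG ltG" by (rule ltG_left_order)
  show "finitely_generated_group GG" by (rule GG_fg)
  show "finite Alph" by (rule finite_Alph)
  show "word_monoid_hom Alph GG pi" by (rule pi_hom)
  show "pi ` lists Alph = carrier GG" by (rule pi_onto)
  show "regular_language Alph LL" by (rule fq_regular[OF fq_LL])
  show "pi ` LL = positive_cone GG ltG" using pi_LL ltG_cone by simp
qed

end

theorem corollary5p15:
  fixes A :: "('a, 'm) monoid_scheme" and B :: "('b, 'n) monoid_scheme"
  assumes "group A" and "group B"
    and "admits_regular_left_order A" and "admits_regular_left_order B"
  shows "admits_regular_left_order (free_product A B \<times>\<times> integer_group)"
proof -
  obtain ltA where rA: "regular_left_order A ltA" using assms(3) by (auto simp: admits_regular_left_order_def)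
  obtain ltB where rB: "regular_left_order B ltB" using assms(4) by (auto simp: admits_regular_left_order_def)
  obtain AlphA \<pi>A LA where A1: "finite AlphA" "word_monoid_hom AlphA A \<pi>A" "\<pi>A ` lists AlphA = carrier A"
    "regular_language AlphA LA" "\<pi>A ` LA = positive_cone A ltA"
    using rA by (auto simp: regular_left_order_def)
  obtain AlphB \<pi>B LB where B1: "finite AlphB" "word_monoid_hom AlphB B \<pi>B" "\<pi>B ` lists AlphB = carrier B"
    "regular_language AlphB LB" "\<pi>B ` LB = positive_cone B ltB"
    using rB by (auto simp: regular_left_order_def)
  have oA: "left_order A ltA" and oB: "left_order B ltB" using rA rB by (auto simp: regular_left_order_def)
  interpret R: rlo A B ltA ltB AlphA \<pi>A LA AlphB \<pi>B LB
    using assms(1,2) oA oB A1 B1 by (intro rlo.intro fpo.intro fp2.intro rlo_axioms.intro fpo_axioms.intro)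
  show ?thesis by (rule R.main)
qed

end
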